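(* For all $n\geq 4$, the abelian group $gr^2(P\Sigma_n)=\Gamma_2(P\Sigma_n)/\Gamma_3(P\Sigma_n)$ has rank $$\phi_2(P\Sigma_n)=(n-1)\,r_n(2)=\frac{n(n-1)^2}{2},$$ and the set $\{[\xi_{ij},\xi_{ji}] : 1\leq i<j\leq n\}\cup\{[\xi_{ij},\xi_{it}] : 1\leq i\leq n,\ i\neq j,t,\ 1\leq j<t\leq n\}$ is a basis of it, where $[a,b]$ denotes the class of the commutator $(a,b)$ modulo $\Gamma_3(P\Sigma_n)$.
   Context: $F_n$ is the free group on $x_1,\dots,x_n$. For $1\leq i\neq j\leq n$, $\xi_{ij}=\xi_{i,j}\in\mathrm{Aut}(F_n)$ is given by $\xi_{i,j}(x_i)=x_j^{-1}x_ix_j$, $\xi_{i,j}(x_l)=x_l$ for $l\neq i$; $P\Sigma_n$ is the subgroup of $\mathrm{Aut}(F_n)$ generated by all $\xi_{i,j}$. $\Gamma_k$ denotes the lower central series; $(a,b)=a^{-1}b^{-1}ab$. $r_n(2)=\frac{n^2-n}{2}$ is the rank of $\Gamma_2(F_n)/\Gamma_3(F_n)$. *)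

theory Defs
  imports "HOL-Algebra.Algebra"
begin

text \<open>A letter (i, False) stands for x_i, (i, True) for x_i^{-1}.\<close>
type_synonym word = "(nat \<times> bool) list"

definition inv_letter :: "nat \<times> bool \<Rightarrow> nat \<times> bool" where
  "inv_letter l = (fst l, \<not> snd l)"

definition inv_word :: "word \<Rightarrow> word" where
  "inv_word w = rev (map inv_letter w)"

fun reduce :: "word \<Rightarrow> word" where
  "reduce [] = []"
| "reduce (x # xs) = (case reduce xs of
      [] \<Rightarrow> [x]
    | y # ys \<Rightarrow> (if y = inv_letter x then ys else x # y # ys))"

definition reduced :: "word \<Rightarrow> bool" where
  "reduced w \<longleftrightarrow> reduce w = w"

definition free_group :: "nat \<Rightarrow> word monoid" where
  "free_group n = \<lparr>carrier = {w. reduced w \<and> fst ` set w \<subseteq> {1..n}},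
                   monoid.mult = (\<lambda>u v. reduce (u @ v)),
                   one = []\<rparr>"

definition subst :: "(nat \<Rightarrow> word) \<Rightarrow> word \<Rightarrow> word" where
  "subst f w = reduce (concat (map (\<lambda>l. if snd l then inv_word (f (fst l)) else f (fst l)) w))"

text \<open>xi_{i,j}: x_i \<mapsto> x_j^{-1} x_i x_j, x_l \<mapsto> x_l for l \<noteq> i, as an element of Aut(F_n)
  (extensional function on the carrier, as in HOL-Algebra's AutoGroup).\<close>
definition xi :: "nat \<Rightarrow> nat \<Rightarrow> nat \<Rightarrow> (word \<Rightarrow> word)" where
  "xi n i j = (\<lambda>w \<in> carrier (free_group n).
      subst (\<lambda>k. if k = i then [(j, True), (i, False), (j, False)] else [(k, False)]) w)"

definition PSigma :: "nat \<Rightarrow> (word \<Rightarrow> word) monoid" where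
  "PSigma n = (AutoGroup (free_group n))\<lparr>carrier :=
      generate (AutoGroup (free_group n))
        {xi n i j | i j. i \<in> {1..n} \<and> j \<in> {1..n} \<and> i \<noteq> j}\<rparr>"

definition comm :: "('a, 'b) monoid_scheme \<Rightarrow> 'a \<Rightarrow> 'a \<Rightarrow> 'a" where
  "comm G a b = inv\<^bsub>G\<^esub> a \<otimes>\<^bsub>G\<^esub> inv\<^bsub>G\<^esub> b \<otimes>\<^bsub>G\<^esub> a \<otimes>\<^bsub>G\<^esub> b"

text \<open>Lower central series: \<Gamma>_1 = G, \<Gamma>_{k+1} = (G, \<Gamma>_k). (Index 0 also gives G.)\<close>
fun lcs :: "('a, 'b) monoid_scheme \<Rightarrow> nat \<Rightarrow> 'a set" where
  "lcs G 0 = carrier G"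
| "lcs G (Suc 0) = carrier G"
| "lcs G (Suc (Suc k)) =
     generate G {comm G a b | a b. a \<in> carrier G \<and> b \<in> lcs G (Suc k)}"

definition gr2 :: "('a, 'b) monoid_scheme \<Rightarrow> 'a set monoid" where
  "gr2 G = (G\<lparr>carrier := lcs G 2\<rparr>) Mod (lcs G 3)"

definition comm_class :: "('a, 'b) monoid_scheme \<Rightarrow> 'a \<Rightarrow> 'a \<Rightarrow> 'a set" where
  "comm_class G a b = lcs G 3 #>\<^bsub>G\<^esub> comm G a b"

definition abelian_basis :: "('a, 'b) monoid_scheme \<Rightarrow> 'a set \<Rightarrow> bool" where
  "abelian_basis Q B \<longleftrightarrow> finite B \<and> B \<subseteq> carrier Q \<and>
     (\<forall>g \<in> carrier Q. \<exists>!c :: 'a \<Rightarrow> int. c \<in> extensional B \<and>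
         g = finprod Q (\<lambda>b. b [^]\<^bsub>Q\<^esub> c b) B)"

definition r_n :: "nat \<Rightarrow> nat \<Rightarrow> nat" where
  "r_n n k = (if k = 2 then (n^2 - n) div 2 else undefined)"

end

theory Submission
  imports Defs
begin

lemma inv_letter_inv[simp]: "inv_letter (inv_letter x) = x"
  by (simp add: inv_letter_def)

lemma inv_letter_neq[simp]: "inv_letter x \<noteq> x" "x \<noteq> inv_letter x"
  by (auto simp add: inv_letter_def prod_eq_iff)

lemma inv_letter_eq_iff[simp]: "(inv_letter x = inv_letter y) = (x = y)"
  by (metis inv_letter_inv)

lemma fst_inv_letter[simp]: "fst (inv_letter x) = fst x"
  by (simp add: inv_letter_def)

fun canc_free :: "word \<Rightarrow> bool" where
  "canc_free [] = True"
| "canc_free [x] = True"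
| "canc_free (x # y # ys) = (y \<noteq> inv_letter x \<and> canc_free (y # ys))"

lemma canc_free_tl: "canc_free (x # xs) \<Longrightarrow> canc_free xs"
  by (cases xs) auto

lemma canc_free_reduce: "canc_free (reduce w)"
proof (induction w)
  case Nil then show ?case by simp
next
  case (Cons x xs)
  then show ?case
    by (auto split: list.split dest: canc_free_tl)
qed

lemma reduce_canc_free: "canc_free w \<Longrightarrow> reduce w = w"
proof (induction w)
  case Nil then show ?case by simp
next
  case (Cons x xs)
  then show ?case by (cases xs) (auto dest: canc_free_tl)
qed

lemma reduced_iff: "reduced w \<longleftrightarrow> canc_free w"
  by (metis canc_free_reduce reduce_canc_free reduced_def)

lemma reduce_idem[simp]: "reduce (reduce w) = reduce w"
  by (simp add: canc_free_reduce reduce_canc_free)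

lemma reduced_reduce[simp]: "reduced (reduce w)"
  by (simp add: reduced_def)

lemma reduce_append_right: "reduce (u @ reduce v) = reduce (u @ v)"
  by (induction u) auto

lemma reduce_Cons_reduce: "reduce (x # reduce v) = reduce (x # v)"
  using reduce_append_right[of "[x]" v] by simp

lemma reduce_cancel: "reduce (x # inv_letter x # v) = reduce v"
proof (cases "reduce v")
  case Nil
  then show ?thesis by simp
next
  case (Cons y ys)
  have cf: "canc_free (y # ys)" using Cons canc_free_reduce by metis
  show ?thesis
  proof (cases "y = x")
    case True
    then show ?thesis using Cons cf
      by (cases ys) auto
  next
    case False
    then show ?thesis using Cons by auto
  qed
qed

lemma reduce_append_left: "reduce (reduce u @ v) = reduce (u @ v)"
proof (induction u)
  case Nil then show ?case by (simp add: reduce_append_right[of "[]", simplified])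
next
  case (Cons x u)
  note IH = Cons.IH
  show ?case
  proof (cases "reduce u")
    case Nil
    have "reduce ((x # u) @ v) = reduce (x # reduce (u @ v))"
      by (simp add: reduce_Cons_reduce)
    also have "\<dots> = reduce (x # reduce v)"
      using IH Nil by simp
    also have "\<dots> = reduce (reduce (x # u) @ v)"
      using Nil by (simp add: reduce_Cons_reduce)
    finally show ?thesis by simp
  next
    case (Cons y ys)
    have "reduce ((x # u) @ v) = reduce (x # reduce (u @ v))"
      by (simp add: reduce_Cons_reduce)
    also have "\<dots> = reduce (x # reduce (y # ys @ v))"
      using IH Cons by simp
    also have "\<dots> = reduce (x # y # ys @ v)"
      by (rule reduce_Cons_reduce)
    finally have e: "reduce ((x # u) @ v) = reduce (x # y # ys @ v)" .
    show ?thesis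
    proof (cases "y = inv_letter x")
      case True
      have r: "reduce (x # u) = ys" using Cons True by simp
      have "reduce ((x # u) @ v) = reduce (ys @ v)" using e True reduce_cancel by metis
      then show ?thesis using r by metis
    next
      case False
      have r: "reduce (x # u) = x # y # ys" using Cons False by simp
      then show ?thesis using e r by (metis append_Cons)
    qed
  qed
qed

lemma reduce_append: "reduce (reduce u @ reduce v) = reduce (u @ v)"
  by (simp add: reduce_append_left reduce_append_right)

lemma set_reduce: "set (reduce w) \<subseteq> set w"
proof (induction w)
  case Nil then show ?case by simp
next
  case (Cons x xs)
  then show ?case by (auto split: list.split)
qed

lemma inv_word_Nil[simp]: "inv_word [] = []"
  by (simp add: inv_word_def)

lemma inv_word_Cons: "inv_word (x # w) = inv_word w @ [inv_letter x]"
  by (simp add: inv_word_def)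

lemma inv_word_append: "inv_word (u @ v) = inv_word v @ inv_word u"
  by (simp add: inv_word_def)

lemma inv_word_inv[simp]: "inv_word (inv_word w) = w"
  by (simp add: inv_word_def rev_map comp_def)

lemma set_inv_word_fst: "fst ` set (inv_word w) = fst ` set w"
  by (simp add: inv_word_def image_image)

lemma reduce_w_inv_app: "reduce (w @ inv_word w @ v) = reduce v"
proof (induction w arbitrary: v)
  case Nil then show ?case by simp
next
  case (Cons x w)
  have "reduce ((x # w) @ inv_word (x # w) @ v) = reduce (x # (w @ inv_word w @ (inv_letter x # v)))"
    by (simp add: inv_word_Cons)
  also have "\<dots> = reduce (x # reduce (w @ inv_word w @ (inv_letter x # v)))"
    by (simp add: reduce_Cons_reduce)
  also have "\<dots> = reduce (x # reduce (inv_letter x # v))"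
    using Cons.IH by simp
  also have "\<dots> = reduce v"
    by (metis reduce_Cons_reduce reduce_cancel)
  finally show ?case .
qed

lemma reduce_inv_w_app: "reduce (inv_word w @ w @ v) = reduce v"
  using reduce_w_inv_app[of "inv_word w" v] by simp

lemma reduce_w_inv: "reduce (w @ inv_word w) = []"
  using reduce_w_inv_app[of w "[]"] by simp

lemma reduce_inv_w: "reduce (inv_word w @ w) = []"
  using reduce_inv_w_app[of w "[]"] by simp

lemma canc_free_append:
  "canc_free (xs @ ys) \<longleftrightarrow> canc_free xs \<and> canc_free ys \<and>
     (xs \<noteq> [] \<and> ys \<noteq> [] \<longrightarrow> hd ys \<noteq> inv_letter (last xs))"
proof (induction xs rule: canc_free.induct)
  case 1 then show ?case by simp
next
  case (2 x) then show ?case by (cases ys) auto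
next
  case (3 x y ys') then show ?case by auto
qed

lemma canc_free_rev_inv: "canc_free w \<Longrightarrow> canc_free (inv_word w)"
proof (induction w rule: canc_free.induct)
  case 1 then show ?case by simp
next
  case (2 x) then show ?case by (simp add: inv_word_def)
next
  case (3 x y ys)
  have "inv_word (x # y # ys) = inv_word (y # ys) @ [inv_letter x]"
    by (simp add: inv_word_Cons)
  moreover have "last (inv_word (y # ys)) = inv_letter y"
    by (simp add: inv_word_def)
  ultimately show ?case using 3
    by (auto simp add: canc_free_append inv_word_def)
qed

lemma reduced_inv_word: "reduced w \<Longrightarrow> reduced (inv_word w)"
  by (simp add: reduced_iff canc_free_rev_inv)

lemma carrier_free: "w \<in> carrier (free_group n) \<longleftrightarrow> reduced w \<and> fst ` set w \<subseteq> {1..n}"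
  by (simp add: free_group_def)

lemma mult_free[simp]: "u \<otimes>\<^bsub>free_group n\<^esub> v = reduce (u @ v)"
  by (simp add: free_group_def)

lemma one_free[simp]: "\<one>\<^bsub>free_group n\<^esub> = []"
  by (simp add: free_group_def)

lemma reduce_letters: "fst ` set w \<subseteq> A \<Longrightarrow> fst ` set (reduce w) \<subseteq> A"
  using set_reduce by blast

lemma group_free: "group (free_group n)"
proof (rule groupI)
  fix x y assume "x \<in> carrier (free_group n)" "y \<in> carrier (free_group n)"
  then show "x \<otimes>\<^bsub>free_group n\<^esub> y \<in> carrier (free_group n)"
    using reduce_letters[of "x @ y" "{1..n}"] by (auto simp add: carrier_free)
next
  show "\<one>\<^bsub>free_group n\<^esub> \<in> carrier (free_group n)"
    by (simp add: carrier_free reduced_def)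
next
  fix x y z
  show "x \<otimes>\<^bsub>free_group n\<^esub> y \<otimes>\<^bsub>free_group n\<^esub> z = x \<otimes>\<^bsub>free_group n\<^esub> (y \<otimes>\<^bsub>free_group n\<^esub> z)"
    by (simp add: reduce_append_left reduce_append_right)
next
  fix x assume "x \<in> carrier (free_group n)"
  then show "\<one>\<^bsub>free_group n\<^esub> \<otimes>\<^bsub>free_group n\<^esub> x = x"
    by (simp add: carrier_free reduced_def)
next
  fix x assume x: "x \<in> carrier (free_group n)"
  then have "inv_word x \<in> carrier (free_group n)"
    by (simp add: carrier_free reduced_inv_word set_inv_word_fst)
  moreover have "inv_word x \<otimes>\<^bsub>free_group n\<^esub> x = \<one>\<^bsub>free_group n\<^esub>"
    by (simp add: reduce_inv_w)
  ultimately show "\<exists>y\<in>carrier (free_group n). y \<otimes>\<^bsub>free_group n\<^esub> x = \<one>\<^bsub>free_group n\<^esub>"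
    by blast
qed

lemma inv_word_carrier: "x \<in> carrier (free_group n) \<Longrightarrow> inv_word x \<in> carrier (free_group n)"
  by (simp add: carrier_free reduced_inv_word set_inv_word_fst)

lemma inv_free: "x \<in> carrier (free_group n) \<Longrightarrow> inv\<^bsub>free_group n\<^esub> x = inv_word x"
  by (rule group.inv_equality[OF group_free]) (auto simp add: reduce_inv_w inv_word_carrier)

lemma gen_carrier: "k \<in> {1..n} \<Longrightarrow> [(k, b)] \<in> carrier (free_group n)"
  by (simp add: carrier_free reduced_def)

lemma reduce_single[simp]: "reduce [x] = [x]"
  by simp


abbreviation F :: "nat \<Rightarrow> word monoid" where "F n \<equiv> free_group n"

definition gsub :: "(nat \<Rightarrow> word) \<Rightarrow> nat \<times> bool \<Rightarrow> word" where
  "gsub f l = (if snd l then inv_word (f (fst l)) else f (fst l))"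

lemma subst_gsub: "subst f w = reduce (concat (map (gsub f) w))"
  by (simp add: subst_def gsub_def[abs_def])

lemma gsub_inv: "gsub f (inv_letter x) = inv_word (gsub f x)"
  by (simp add: gsub_def inv_letter_def)

lemma subst_reduce: "subst f (reduce w) = subst f w"
proof (induction w)
  case Nil then show ?case by simp
next
  case (Cons x w)
  let ?g = "gsub f"
  have rhs: "subst f (x # w) = reduce (?g x @ concat (map ?g (reduce w)))"
  proof -
    have "subst f (x # w) = reduce (?g x @ reduce (concat (map ?g w)))"
      by (simp add: subst_gsub reduce_append_right)
    also have "\<dots> = reduce (?g x @ reduce (concat (map ?g (reduce w))))"
      using Cons.IH by (simp add: subst_gsub)
    finally show ?thesis by (simp add: reduce_append_right)
  qed
  show ?case
  proof (cases "reduce w")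
    case Nil
    then show ?thesis using rhs by (simp add: subst_gsub)
  next
    case (Cons y ys)
    show ?thesis
    proof (cases "y = inv_letter x")
      case True
      have "reduce (x # w) = ys" using Cons True by simp
      moreover have "reduce (?g x @ concat (map ?g (reduce w))) = reduce (concat (map ?g ys))"
        using Cons True by (simp add: gsub_inv reduce_w_inv_app)
      ultimately show ?thesis using rhs by (simp add: subst_gsub)
    next
      case False
      have "reduce (x # w) = x # reduce w" using Cons False by simp
      then show ?thesis using rhs by (simp add: subst_gsub)
    qed
  qed
qed

lemma subst_append: "subst f (u @ v) = reduce (subst f u @ subst f v)"
  by (simp add: subst_gsub reduce_append)

lemma letters_gsub:
  assumes "\<And>k. k \<in> {1..n} \<Longrightarrow> fst ` set (f k) \<subseteq> {1..n}" "fst ` set w \<subseteq> {1..n}"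
  shows "fst ` set (concat (map (gsub f) w)) \<subseteq> {1..n}"
  using assms(2)
proof (induction w)
  case Nil then show ?case by simp
next
  case (Cons x w)
  have x: "fst x \<in> {1..n}" using Cons.prems by simp
  have "fst ` set (gsub f x) \<subseteq> {1..n}"
  proof (cases "snd x")
    case True then show ?thesis using assms(1)[OF x] by (simp add: gsub_def set_inv_word_fst)
  next
    case False then show ?thesis using assms(1)[OF x] by (simp add: gsub_def)
  qed
  moreover have "fst ` set (concat (map (gsub f) w)) \<subseteq> {1..n}" using Cons by simp
  ultimately show ?case by (simp add: image_Un)
qed

lemma subst_carrier:
  assumes "\<And>k. k \<in> {1..n} \<Longrightarrow> f k \<in> carrier (F n)" "w \<in> carrier (F n)"
  shows "subst f w \<in> carrier (F n)"
proof -
  have "fst ` set (concat (map (gsub f) w)) \<subseteq> {1..n}"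
    by (rule letters_gsub) (use assms in \<open>auto simp add: carrier_free\<close>)
  then show ?thesis
    by (simp add: subst_gsub carrier_free reduce_letters)
qed

lemma subst_hom:
  assumes "\<And>k. k \<in> {1..n} \<Longrightarrow> f k \<in> carrier (F n)"
  shows "subst f \<in> hom (F n) (F n)"
proof (rule homI)
  fix x assume "x \<in> carrier (F n)"
  then show "subst f x \<in> carrier (F n)" using subst_carrier assms by blast
next
  fix x y assume "x \<in> carrier (F n)" "y \<in> carrier (F n)"
  then show "subst f (x \<otimes>\<^bsub>F n\<^esub> y) = subst f x \<otimes>\<^bsub>F n\<^esub> subst f y"
    by (simp add: subst_reduce subst_append)
qed

lemma restrict_hom:
  assumes "h \<in> hom (F n) (F n)" shows "(\<lambda>x\<in>carrier (F n). h x) \<in> hom (F n) (F n)"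
  using assms monoid.m_closed[OF group.is_monoid[OF group_free]]
  by (auto simp add: hom_def Pi_iff)

lemma inv_gen: "k \<in> {1..n} \<Longrightarrow> inv\<^bsub>F n\<^esub> [(k, False)] = [(k, True)]"
  by (simp add: inv_free gen_carrier inv_word_def inv_letter_def)

lemma hom_eq_gens:
  assumes h1: "h1 \<in> hom (F n) (F n)" and h2: "h2 \<in> hom (F n) (F n)"
    and eq: "\<And>k. k \<in> {1..n} \<Longrightarrow> h1 [(k, False)] = h2 [(k, False)]"
    and w: "w \<in> carrier (F n)"
  shows "h1 w = h2 w"
proof -
  have gh1: "group_hom (F n) (F n) h1"
    using h1 by (simp add: group_hom_def group_hom_axioms_def group_free)
  have gh2: "group_hom (F n) (F n) h2"
    using h2 by (simp add: group_hom_def group_hom_axioms_def group_free)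
  have letter: "h1 [l] = h2 [l]" if "fst l \<in> {1..n}" for l
  proof (cases l)
    case (Pair k b)
    show ?thesis
    proof (cases b)
      case False then show ?thesis using Pair that eq by simp
    next
      case True
      have "[l] = inv\<^bsub>F n\<^esub> [(k, False)]" using Pair True that inv_gen by simp
      then show ?thesis
        using that Pair eq gen_carrier[of k n False]
          group_hom.hom_inv[OF gh1] group_hom.hom_inv[OF gh2] by simp
    qed
  qed
  from w have "reduced w" "fst ` set w \<subseteq> {1..n}" by (auto simp add: carrier_free)
  then show ?thesis
  proof (induction w)
    case Nil
    have "h1 [] = []" "h2 [] = []"
      using group_hom.hom_one[OF gh1] group_hom.hom_one[OF gh2] by simp_all
    then show ?case by simp
  next
    case (Cons l w)
    have cf: "canc_free w" using Cons.prems canc_free_tl reduced_iff by blast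
    have wc: "w \<in> carrier (F n)" using cf Cons.prems by (simp add: carrier_free reduced_iff)
    have lc: "[l] \<in> carrier (F n)" using Cons.prems by (simp add: carrier_free reduced_def)
    have e: "l # w = [l] \<otimes>\<^bsub>F n\<^esub> w"
      using Cons.prems by (simp add: reduced_def)
    have "h1 (l # w) = h1 [l] \<otimes>\<^bsub>F n\<^esub> h1 w" "h2 (l # w) = h2 [l] \<otimes>\<^bsub>F n\<^esub> h2 w"
      using hom_mult[OF h1 lc wc] hom_mult[OF h2 lc wc] e by metis+
    moreover have "h1 w = h2 w" using Cons.IH cf Cons.prems by (simp add: reduced_iff)
    moreover have "h1 [l] = h2 [l]" using letter Cons.prems by simp
    ultimately show ?case by simp
  qed
qed

definition xfun :: "nat \<Rightarrow> nat \<Rightarrow> nat \<Rightarrow> word" where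
  "xfun i j = (\<lambda>k. if k = i then [(j, True), (i, False), (j, False)] else [(k, False)])"

definition xinvfun :: "nat \<Rightarrow> nat \<Rightarrow> nat \<Rightarrow> word" where
  "xinvfun i j = (\<lambda>k. if k = i then [(j, False), (i, False), (j, True)] else [(k, False)])"

definition xi' :: "nat \<Rightarrow> nat \<Rightarrow> nat \<Rightarrow> (word \<Rightarrow> word)" where
  "xi' n i j = (\<lambda>w \<in> carrier (free_group n). subst (xinvfun i j) w)"

lemma xi_alt: "xi n i j = (\<lambda>w \<in> carrier (F n). subst (xfun i j) w)"
  by (simp add: xi_def xfun_def)

definition okij :: "nat \<Rightarrow> nat \<Rightarrow> nat \<Rightarrow> bool" where
  "okij n i j \<longleftrightarrow> i \<in> {1..n} \<and> j \<in> {1..n} \<and> i \<noteq> j"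

lemma xfun_carrier: "okij n i j \<Longrightarrow> k \<in> {1..n} \<Longrightarrow> xfun i j k \<in> carrier (F n)"
  by (auto simp add: okij_def xfun_def carrier_free reduced_def inv_letter_def)

lemma xinvfun_carrier: "okij n i j \<Longrightarrow> k \<in> {1..n} \<Longrightarrow> xinvfun i j k \<in> carrier (F n)"
  by (auto simp add: okij_def xinvfun_def carrier_free reduced_def inv_letter_def)

lemma xi_hom: "okij n i j \<Longrightarrow> xi n i j \<in> hom (F n) (F n)"
  unfolding xi_alt by (intro restrict_hom subst_hom xfun_carrier)

lemma xi'_hom: "okij n i j \<Longrightarrow> xi' n i j \<in> hom (F n) (F n)"
  unfolding xi'_def by (intro restrict_hom subst_hom xinvfun_carrier)

lemma subst_single: "subst f [(k, False)] = reduce (f k)"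
  by (simp add: subst_def)

lemma subst_single_inv: "subst f [(k, True)] = reduce (inv_word (f k))"
  by (simp add: subst_def)

lemma xi_gen: "okij n i j \<Longrightarrow> k \<in> {1..n} \<Longrightarrow>
   xi n i j [(k, False)] = (if k = i then [(j, True), (i, False), (j, False)] else [(k, False)])"
  by (auto simp add: xi_alt gen_carrier subst_single xfun_def okij_def inv_letter_def)

lemma xi'_gen: "okij n i j \<Longrightarrow> k \<in> {1..n} \<Longrightarrow>
   xi' n i j [(k, False)] = (if k = i then [(j, False), (i, False), (j, True)] else [(k, False)])"
  by (auto simp add: xi'_def gen_carrier subst_single xinvfun_def okij_def inv_letter_def)

lemma xi_apply: "w \<in> carrier (F n) \<Longrightarrow> xi n i j w = reduce (concat (map (gsub (xfun i j)) w))"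
  by (simp add: xi_alt subst_gsub)

lemma xi'_apply: "w \<in> carrier (F n) \<Longrightarrow> xi' n i j w = reduce (concat (map (gsub (xinvfun i j)) w))"
  by (simp add: xi'_def subst_gsub)

lemma id_hom: "(\<lambda>x. x) \<in> hom (F n) (F n)"
  by (rule homI) auto

lemma word3_carrier: "okij n i j \<Longrightarrow> [(j, b1), (i, False), (j, b2)] \<in> carrier (F n)"
  by (auto simp add: okij_def carrier_free reduced_def inv_letter_def)

lemma xi_xi'_id: assumes "okij n i j" "w \<in> carrier (F n)"
  shows "xi n i j (xi' n i j w) = w"
proof -
  have "(xi n i j \<circ> xi' n i j) w = (\<lambda>x. x) w"
  proof (rule hom_eq_gens[OF hom_compose[OF xi'_hom xi_hom] id_hom _ assms(2)])
    fix k assume k: "k \<in> {1..n}"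
    show "(xi n i j \<circ> xi' n i j) [(k, False)] = [(k, False)]"
    proof (cases "k = i")
      case True
      have ij: "i \<noteq> j" using assms(1) by (simp add: okij_def)
      have "xi' n i j [(k, False)] = [(j, False), (i, False), (j, True)]"
        using True assms(1) k by (simp add: xi'_gen)
      moreover have "xi n i j [(j, False), (i, False), (j, True)] = [(i, False)]"
        using ij word3_carrier[OF assms(1)]
        by (simp add: xi_apply gsub_def xfun_def inv_word_def inv_letter_def)
      ultimately show ?thesis using True by simp
    next
      case False
      then show ?thesis using assms(1) k by (simp add: xi'_gen xi_gen)
    qed
  qed (use assms in auto)
  then show ?thesis by simp
qed

lemma xi'_xi_id: assumes "okij n i j" "w \<in> carrier (F n)"
  shows "xi' n i j (xi n i j w) = w"
proof -
  have "(xi' n i j \<circ> xi n i j) w = (\<lambda>x. x) w"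
  proof (rule hom_eq_gens[OF hom_compose[OF xi_hom xi'_hom] id_hom _ assms(2)])
    fix k assume k: "k \<in> {1..n}"
    show "(xi' n i j \<circ> xi n i j) [(k, False)] = [(k, False)]"
    proof (cases "k = i")
      case True
      have ij: "i \<noteq> j" using assms(1) by (simp add: okij_def)
      have "xi n i j [(k, False)] = [(j, True), (i, False), (j, False)]"
        using True assms(1) k by (simp add: xi_gen)
      moreover have "xi' n i j [(j, True), (i, False), (j, False)] = [(i, False)]"
        using ij word3_carrier[OF assms(1)]
        by (simp add: xi'_apply gsub_def xinvfun_def inv_word_def inv_letter_def)
      ultimately show ?thesis using True by simp
    next
      case False
      then show ?thesis using assms(1) k by (simp add: xi'_gen xi_gen)
    qed
  qed (use assms in auto)
  then show ?thesis by simp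
qed

lemma xi_auto: assumes "okij n i j" shows "xi n i j \<in> auto (F n)"
proof -
  have "bij_betw (xi n i j) (carrier (F n)) (carrier (F n))"
  proof (rule bij_betw_byWitness[where f' = "xi' n i j"])
    show "\<forall>a\<in>carrier (F n). xi' n i j (xi n i j a) = a" using xi'_xi_id assms by blast
    show "\<forall>a'\<in>carrier (F n). xi n i j (xi' n i j a') = a'" using xi_xi'_id assms by blast
    show "xi n i j ` carrier (F n) \<subseteq> carrier (F n)"
      using hom_carrier[OF xi_hom[OF assms]] .
    show "xi' n i j ` carrier (F n) \<subseteq> carrier (F n)"
      using hom_carrier[OF xi'_hom[OF assms]] .
  qed
  then show ?thesis
    using xi_hom[OF assms] by (simp add: auto_def Bij_def xi_def)
qed

abbreviation AG :: "nat \<Rightarrow> (word \<Rightarrow> word) monoid" where "AG n \<equiv> AutoGroup (F n)"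

lemma group_AG: "group (AG n)"
  using group.AutoGroup[OF group_free] .

lemma carrier_AG: "carrier (AG n) = auto (F n)"
  by (simp add: AutoGroup_def)

definition Xgens :: "nat \<Rightarrow> (word \<Rightarrow> word) set" where
  "Xgens n = {xi n i j | i j. i \<in> {1..n} \<and> j \<in> {1..n} \<and> i \<noteq> j}"

lemma PSigma_alt: "PSigma n = (AG n)\<lparr>carrier := generate (AG n) (Xgens n)\<rparr>"
  by (simp add: PSigma_def Xgens_def)

lemma Xgens_sub: "Xgens n \<subseteq> carrier (AG n)"
  using xi_auto by (auto simp add: Xgens_def carrier_AG okij_def)

lemma subgroup_PS: "subgroup (generate (AG n) (Xgens n)) (AG n)"
  using group.generate_is_subgroup[OF group_AG Xgens_sub] .

lemma group_PS: "group (PSigma n)"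
  unfolding PSigma_alt using subgroup.subgroup_is_group[OF subgroup_PS group_AG] .

lemma carrier_PS: "carrier (PSigma n) = generate (AG n) (Xgens n)"
  by (simp add: PSigma_alt)

lemma carrier_PS_auto: "x \<in> carrier (PSigma n) \<Longrightarrow> x \<in> auto (F n)"
  using subgroup.subset[OF subgroup_PS] carrier_AG carrier_PS by blast

lemma mult_PS: "x \<in> carrier (PSigma n) \<Longrightarrow> y \<in> carrier (PSigma n) \<Longrightarrow>
   x \<otimes>\<^bsub>PSigma n\<^esub> y = (\<lambda>w \<in> carrier (F n). x (y w))"
  using carrier_PS_auto[of x n] carrier_PS_auto[of y n]
  by (simp add: PSigma_alt AutoGroup_def BijGroup_def auto_def compose_def)

lemma one_PS: "\<one>\<^bsub>PSigma n\<^esub> = (\<lambda>w \<in> carrier (F n). w)"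
  by (simp add: PSigma_alt AutoGroup_def BijGroup_def)

lemma PS_hom: "x \<in> carrier (PSigma n) \<Longrightarrow> x \<in> hom (F n) (F n)"
  using carrier_PS_auto by (simp add: auto_def)

lemma PS_ext: "x \<in> carrier (PSigma n) \<Longrightarrow> x \<in> extensional (carrier (F n))"
  using carrier_PS_auto by (simp add: auto_def Bij_def)

lemma xi_in_PS: "okij n i j \<Longrightarrow> xi n i j \<in> carrier (PSigma n)"
  unfolding carrier_PS by (rule generate.incl) (unfold Xgens_def okij_def, blast)

lemma PS_eqI:
  assumes "x \<in> carrier (PSigma n)" "y \<in> carrier (PSigma n)"
    "\<And>k. k \<in> {1..n} \<Longrightarrow> x [(k, False)] = y [(k, False)]"
  shows "x = y"
proof (rule extensionalityI[OF PS_ext[OF assms(1)] PS_ext[OF assms(2)]])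
  fix w assume w: "w \<in> carrier (F n)"
  have h1: "x \<in> hom (F n) (F n)" "y \<in> hom (F n) (F n)" using PS_hom assms(1,2) by auto
  show "x w = y w" by (rule hom_eq_gens[OF h1 assms(3) w]) simp
qed

lemma PS_apply_carrier: "x \<in> carrier (PSigma n) \<Longrightarrow> w \<in> carrier (F n) \<Longrightarrow> x w \<in> carrier (F n)"
  by (rule hom_in_carrier[OF PS_hom])


datatype R = Rt (rc: int) (rl: "nat \<Rightarrow> int") (rq: "nat \<Rightarrow> nat \<Rightarrow> int")

lemma R_eqI: "rc a = rc b \<Longrightarrow> rl a = rl b \<Longrightarrow> rq a = rq b \<Longrightarrow> a = b"
  by (cases a; cases b) auto

instantiation R :: comm_ring_1
begin
definition "0 = Rt 0 (\<lambda>u. 0) (\<lambda>u v. 0)"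
definition "1 = Rt 1 (\<lambda>u. 0) (\<lambda>u v. 0)"
definition "a + b = Rt (rc a + rc b) (\<lambda>u. rl a u + rl b u) (\<lambda>u v. rq a u v + rq b u v)"
definition "a - b = Rt (rc a - rc b) (\<lambda>u. rl a u - rl b u) (\<lambda>u v. rq a u v - rq b u v)"
definition "- a = Rt (- rc a) (\<lambda>u. - rl a u) (\<lambda>u v. - rq a u v)"
definition "a * b = Rt (rc a * rc b) (\<lambda>u. rc a * rl b u + rc b * rl a u)
   (\<lambda>u v. rc a * rq b u v + rc b * rq a u v + rl a u * rl b v + rl b u * rl a v)"
instance
proof
  fix a b c :: R
  show "a * b * c = a * (b * c)"
    by (rule R_eqI) (auto simp add: times_R_def algebra_simps)
  show "a * b = b * a"
    by (rule R_eqI) (auto simp add: times_R_def algebra_simps)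
  show "1 * a = a"
    by (rule R_eqI) (auto simp add: times_R_def one_R_def)
  show "(a + b) * c = a * c + b * c"
    by (rule R_eqI) (auto simp add: times_R_def plus_R_def algebra_simps)
  show "a + b + c = a + (b + c)"
    by (rule R_eqI) (auto simp add: plus_R_def algebra_simps)
  show "a + b = b + a"
    by (rule R_eqI) (auto simp add: plus_R_def algebra_simps)
  show "0 + a = a"
    by (rule R_eqI) (auto simp add: plus_R_def zero_R_def)
  show "- a + a = 0"
    by (rule R_eqI) (auto simp add: plus_R_def zero_R_def uminus_R_def)
  show "a - b = a + - b"
    by (rule R_eqI) (auto simp add: plus_R_def minus_R_def uminus_R_def)
  show "(0::R) \<noteq> 1"
    by (simp add: zero_R_def one_R_def)
qed
end

lemma rc_simps[simp]: "rc 0 = 0" "rc 1 = 1" "rc (a + b) = rc a + rc b" "rc (a - b) = rc a - rc b"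
  "rc (- a) = - rc a" "rc (a * b) = rc a * rc b"
  by (simp_all add: zero_R_def one_R_def plus_R_def minus_R_def uminus_R_def times_R_def)

lemma rl_simps[simp]: "rl 0 u = 0" "rl 1 u = 0" "rl (a + b) u = rl a u + rl b u" "rl (a - b) u = rl a u - rl b u"
  "rl (- a) u = - rl a u" "rl (a * b) u = rc a * rl b u + rc b * rl a u"
  by (simp_all add: zero_R_def one_R_def plus_R_def minus_R_def uminus_R_def times_R_def)

lemma rq_simps[simp]: "rq 0 u v = 0" "rq 1 u v = 0" "rq (a + b) u v = rq a u v + rq b u v"
  "rq (a - b) u v = rq a u v - rq b u v"
  "rq (- a) u v = - rq a u v"
  "rq (a * b) u v = rc a * rq b u v + rc b * rq a u v + rl a u * rl b v + rl b u * rl a v"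
  by (simp_all add: zero_R_def one_R_def plus_R_def minus_R_def uminus_R_def times_R_def)

lemma rc_sum: "rc (sum f A) = (\<Sum>x\<in>A. rc (f x))"
  by (induction A rule: infinite_finite_induct) auto

lemma rl_sum: "rl (sum f A) u = (\<Sum>x\<in>A. rl (f x) u)"
  by (induction A rule: infinite_finite_induct) auto

lemma rq_sum: "rq (sum f A) u v = (\<Sum>x\<in>A. rq (f x) u v)"
  by (induction A rule: infinite_finite_induct) auto

definition dlt :: "nat \<Rightarrow> nat \<Rightarrow> int" where "dlt a b = (if a = b then 1 else 0)"

definition eps :: "nat \<times> bool \<Rightarrow> R" where
  "eps l = (if snd l then Rt 1 (\<lambda>u. - dlt u (fst l)) (\<lambda>u v. if u = fst l \<and> v = fst l then 2 else 0)
            else Rt 1 (\<lambda>u. dlt u (fst l)) (\<lambda>u v. 0))"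

definition Dl :: "nat \<times> bool \<Rightarrow> nat \<Rightarrow> R" where
  "Dl l r = (if r = fst l then (if snd l then - eps l else 1) else 0)"

fun epsw :: "word \<Rightarrow> R" where
  "epsw [] = 1"
| "epsw (l # w) = eps l * epsw w"

fun Dw :: "word \<Rightarrow> nat \<Rightarrow> R" where
  "Dw [] r = 0"
| "Dw (l # w) r = Dl l r + eps l * Dw w r"

lemma eps_inv: "eps l * eps (inv_letter l) = 1"
  by (rule R_eqI) (auto simp add: eps_def inv_letter_def dlt_def fun_eq_iff)

lemma Dl_inv: "Dl l r + eps l * Dl (inv_letter l) r = 0"
proof (cases "snd l")
  case True
  have "eps l * eps (inv_letter l) = 1" by (rule eps_inv)
  then show ?thesis using True by (simp add: Dl_def inv_letter_def)
next
  case False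
  have "eps l * eps (inv_letter l) = 1" by (rule eps_inv)
  then show ?thesis using False by (simp add: Dl_def inv_letter_def)
qed

lemma epsw_append: "epsw (u @ v) = epsw u * epsw v"
  by (induction u) (auto simp add: algebra_simps)

lemma Dw_append: "Dw (u @ v) r = Dw u r + epsw u * Dw v r"
  by (induction u) (auto simp add: algebra_simps)

lemma epsw_reduce: "epsw (reduce w) = epsw w"
proof (induction w)
  case Nil then show ?case by simp
next
  case (Cons x xs)
  show ?case
  proof (cases "reduce xs")
    case Nil then show ?thesis using Cons.IH by simp
  next
    case (Cons y ys)
    show ?thesis
    proof (cases "y = inv_letter x")
      case True
      have "epsw xs = eps (inv_letter x) * epsw ys" using Cons.IH Cons True by (metis epsw.simps(2))
      then have "epsw (x # xs) = epsw ys"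
        using eps_inv[of x] by (simp add: mult.assoc[symmetric])
      then show ?thesis using Cons True by simp
    next
      case False
      then show ?thesis using Cons.IH Cons by simp
    qed
  qed
qed

lemma Dw_reduce: "Dw (reduce w) r = Dw w r"
proof (induction w)
  case Nil then show ?case by simp
next
  case (Cons x xs)
  show ?case
  proof (cases "reduce xs")
    case Nil then show ?thesis using Cons.IH by simp
  next
    case (Cons y ys)
    show ?thesis
    proof (cases "y = inv_letter x")
      case True
      have "Dw xs r = Dl (inv_letter x) r + eps (inv_letter x) * Dw ys r"
        using Cons.IH Cons True by (metis Dw.simps(2))
      then have "Dw (x # xs) r = (Dl x r + eps x * Dl (inv_letter x) r) + (eps x * eps (inv_letter x)) * Dw ys r"
        by (simp add: algebra_simps)
      then have "Dw (x # xs) r = Dw ys r" by (simp only: Dl_inv eps_inv) simp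
      then show ?thesis using Cons True by simp
    next
      case False
      then show ?thesis using Cons.IH Cons by simp
    qed
  qed
qed

lemma epsw_inv_word: "epsw (inv_word w) * epsw w = 1"
  using epsw_reduce[of "inv_word w @ w"] by (simp add: reduce_inv_w epsw_append)

lemma Dw_inv_word: "Dw (inv_word w) r = - (epsw (inv_word w) * Dw w r)"
proof -
  have "Dw (inv_word w @ w) r = 0"
    using Dw_reduce[of "inv_word w @ w" r] by (simp add: reduce_inv_w)
  then show ?thesis by (simp add: Dw_append eq_neg_iff_add_eq_0)
qed

lemma inv_unique_R: "(a::R) * x = 1 \<Longrightarrow> b * x = 1 \<Longrightarrow> a = b"
  by (metis mult.assoc mult.commute mult_1_right)

lemma eps_inv_letter_pair: "eps (k, True) * eps (k, False) = 1"
  using eps_inv[of "(k, True)"] by (simp add: inv_letter_def)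

lemma chain_rule:
  assumes E: "\<And>k. k \<in> {1..n} \<Longrightarrow> epsw (f k) = eps (k, False)"
    and w: "fst ` set w \<subseteq> {1..n}"
  shows "epsw (subst f w) = epsw w \<and> (\<forall>r. Dw (subst f w) r = (\<Sum>k\<in>{1..n}. Dw w k * Dw (f k) r))"
proof -
  have "epsw (concat (map (gsub f) w)) = epsw w \<and>
        (\<forall>r. Dw (concat (map (gsub f) w)) r = (\<Sum>k\<in>{1..n}. Dw w k * Dw (f k) r))"
    using w
  proof (induction w)
    case Nil then show ?case by simp
  next
    case (Cons l w)
    obtain m b where l: "l = (m, b)" by (cases l)
    have m: "m \<in> {1..n}" using Cons.prems l by simp
    have IH: "epsw (concat (map (gsub f) w)) = epsw w"
      "\<And>r. Dw (concat (map (gsub f) w)) r = (\<Sum>k\<in>{1..n}. Dw w k * Dw (f k) r)"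
      using Cons by auto
    have epsg: "epsw (gsub f l) = eps l"
    proof (cases b)
      case True
      have "epsw (inv_word (f m)) * eps (m, False) = 1" using epsw_inv_word[of "f m"] E[OF m] by simp
      then have "epsw (inv_word (f m)) = eps (m, True)"
        using eps_inv_letter_pair inv_unique_R by blast
      then show ?thesis using True l by (simp add: gsub_def)
    next
      case False then show ?thesis using l E[OF m] by (simp add: gsub_def)
    qed
    have Dg: "Dw (gsub f l) r = (\<Sum>k\<in>{1..n}. Dl l k * Dw (f k) r)" for r
    proof (cases b)
      case True
      have "epsw (inv_word (f m)) * eps (m, False) = 1" using epsw_inv_word[of "f m"] E[OF m] by simp
      then have ei: "epsw (inv_word (f m)) = eps (m, True)"
        using eps_inv_letter_pair inv_unique_R by blast
      have "(\<Sum>k\<in>{1..n}. Dl l k * Dw (f k) r) = (\<Sum>k\<in>{1..n}. if k = m then - eps (m, True) * Dw (f m) r else 0)"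
        by (rule sum.cong) (auto simp add: Dl_def l True)
      also have "\<dots> = - eps (m, True) * Dw (f m) r" using m by simp
      finally show ?thesis using True l ei by (simp add: gsub_def Dw_inv_word)
    next
      case False
      have "(\<Sum>k\<in>{1..n}. Dl l k * Dw (f k) r) = (\<Sum>k\<in>{1..n}. if k = m then Dw (f m) r else 0)"
        by (rule sum.cong) (auto simp add: Dl_def l False)
      also have "\<dots> = Dw (f m) r" using m by simp
      finally show ?thesis using False l by (simp add: gsub_def)
    qed
    have "epsw (concat (map (gsub f) (l # w))) = epsw (l # w)"
      using IH epsg by (simp add: epsw_append)
    moreover have "Dw (concat (map (gsub f) (l # w))) r = (\<Sum>k\<in>{1..n}. Dw (l # w) k * Dw (f k) r)" for r
    proof -
      have "Dw (concat (map (gsub f) (l # w))) r = Dw (gsub f l) r + eps l * Dw (concat (map (gsub f) w)) r"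
        using epsg by (simp add: Dw_append)
      also have "\<dots> = (\<Sum>k\<in>{1..n}. Dl l k * Dw (f k) r) + eps l * (\<Sum>k\<in>{1..n}. Dw w k * Dw (f k) r)"
        using Dg IH by simp
      also have "\<dots> = (\<Sum>k\<in>{1..n}. Dw (l # w) k * Dw (f k) r)"
        by (simp add: sum.distrib sum_distrib_left algebra_simps)
      finally show ?thesis .
    qed
    ultimately show ?case by blast
  qed
  then show ?thesis by (simp add: subst_gsub epsw_reduce Dw_reduce)
qed


abbreviation PS :: "nat \<Rightarrow> (word \<Rightarrow> word) monoid" where "PS n \<equiv> PSigma n"

definition Mx :: "nat \<Rightarrow> (word \<Rightarrow> word) \<Rightarrow> nat \<Rightarrow> nat \<Rightarrow> R" where
  "Mx n \<phi> i j = Dw (\<phi> [(i, False)]) j"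

definition Eprop :: "nat \<Rightarrow> (word \<Rightarrow> word) \<Rightarrow> bool" where
  "Eprop n \<phi> \<longleftrightarrow> (\<forall>k\<in>{1..n}. epsw (\<phi> [(k, False)]) = eps (k, False))"

lemma PS_subst:
  assumes phi: "\<phi> \<in> carrier (PS n)" and w: "w \<in> carrier (F n)"
  shows "\<phi> w = subst (\<lambda>k. \<phi> [(k, False)]) w"
proof -
  have fc: "\<And>k. k \<in> {1..n} \<Longrightarrow> \<phi> [(k, False)] \<in> carrier (F n)"
    using PS_apply_carrier[OF phi] gen_carrier by blast
  show ?thesis
  proof (rule hom_eq_gens[OF PS_hom[OF phi] subst_hom[OF fc] _ w])
    fix k assume k: "k \<in> {1..n}"
    have "reduced (\<phi> [(k, False)])" using fc[OF k] by (simp add: carrier_free)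
    then show "\<phi> [(k, False)] = subst (\<lambda>k. \<phi> [(k, False)]) [(k, False)]"
      by (simp add: subst_single reduced_def)
  qed simp
qed

lemma chainPS:
  assumes phi: "\<phi> \<in> carrier (PS n)" and E: "Eprop n \<phi>" and w: "w \<in> carrier (F n)"
  shows "epsw (\<phi> w) = epsw w \<and> (\<forall>r. Dw (\<phi> w) r = (\<Sum>k\<in>{1..n}. Dw w k * Mx n \<phi> k r))"
proof -
  have wl: "fst ` set w \<subseteq> {1..n}" using w by (simp add: carrier_free)
  have "\<And>k. k \<in> {1..n} \<Longrightarrow> epsw (\<phi> [(k, False)]) = eps (k, False)" using E by (simp add: Eprop_def)
  from chain_rule[of n "\<lambda>k. \<phi> [(k, False)]", OF this wl]
  show ?thesis using PS_subst[OF phi w] by (simp add: Mx_def)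
qed

lemma mult_AG_PS: "x \<otimes>\<^bsub>AG n\<^esub> y = x \<otimes>\<^bsub>PS n\<^esub> y"
  by (simp add: PSigma_alt)

lemma one_AG_PS: "\<one>\<^bsub>AG n\<^esub> = \<one>\<^bsub>PS n\<^esub>"
  by (simp add: PSigma_alt)

lemma inv_AG_PS: "x \<in> carrier (PS n) \<Longrightarrow> inv\<^bsub>AG n\<^esub> x = inv\<^bsub>PS n\<^esub> x"
  unfolding PSigma_alt using group.m_inv_consistent[OF group_AG subgroup_PS]
  by (simp add: carrier_PS)

lemma PS_one_in: "\<one>\<^bsub>PS n\<^esub> \<in> carrier (PS n)"
  by (rule monoid.one_closed[OF group.is_monoid[OF group_PS]])

lemma PS_mult_in: "x \<in> carrier (PS n) \<Longrightarrow> y \<in> carrier (PS n) \<Longrightarrow> x \<otimes>\<^bsub>PS n\<^esub> y \<in> carrier (PS n)"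
  by (rule monoid.m_closed[OF group.is_monoid[OF group_PS]])

lemma PS_inv_in: "x \<in> carrier (PS n) \<Longrightarrow> inv\<^bsub>PS n\<^esub> x \<in> carrier (PS n)"
  by (rule group.inv_closed[OF group_PS])

lemma PS_mult_apply: "x \<in> carrier (PS n) \<Longrightarrow> y \<in> carrier (PS n) \<Longrightarrow> w \<in> carrier (F n) \<Longrightarrow>
  (x \<otimes>\<^bsub>PS n\<^esub> y) w = x (y w)"
  by (simp add: mult_PS)

lemma PS_one_apply: "w \<in> carrier (F n) \<Longrightarrow> \<one>\<^bsub>PS n\<^esub> w = w"
  by (simp add: one_PS)

lemma PS_inv_apply: assumes "x \<in> carrier (PS n)" "w \<in> carrier (F n)"
  shows "x ((inv\<^bsub>PS n\<^esub> x) w) = w"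
proof -
  have "x \<otimes>\<^bsub>PS n\<^esub> inv\<^bsub>PS n\<^esub> x = \<one>\<^bsub>PS n\<^esub>"
    using group.r_inv[OF group_PS assms(1)] .
  then have "(x \<otimes>\<^bsub>PS n\<^esub> (inv\<^bsub>PS n\<^esub> x)) w = w" using assms(2) by (simp add: PS_one_apply)
  then show ?thesis using assms PS_inv_in by (simp add: PS_mult_apply)
qed

lemma epsw_xi_gen: assumes "okij n i j" "k \<in> {1..n}"
  shows "epsw (xi n i j [(k, False)]) = eps (k, False)"
proof (cases "k = i")
  case True
  have "epsw [(j, True), (i, False), (j, False)] = (eps (j, True) * eps (j, False)) * eps (i, False)"
    by (simp add: algebra_simps)
  also have "\<dots> = eps (i, False)" by (simp add: eps_inv_letter_pair)
  finally show ?thesis using assms True by (simp add: xi_gen)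
next
  case False then show ?thesis using assms by (simp add: xi_gen)
qed

lemma Xgens_cases: "h \<in> Xgens n \<Longrightarrow> \<exists>i j. okij n i j \<and> h = xi n i j"
  unfolding Xgens_def okij_def by blast

lemma Eprop_PS: assumes "\<phi> \<in> carrier (PS n)" shows "Eprop n \<phi>"
proof -
  have "\<phi> \<in> generate (AG n) (Xgens n)" using assms carrier_PS by blast
  then show ?thesis
  proof (induction rule: generate.induct)
    case one
    show ?case using gen_carrier by (simp add: Eprop_def one_AG_PS PS_one_apply)
  next
    case (incl h)
    then obtain i j where ij: "okij n i j" "h = xi n i j" using Xgens_cases by blast
    then show ?case using epsw_xi_gen by (simp add: Eprop_def)
  next
    case (inv h)
    then obtain i j where ij: "okij n i j" "h = xi n i j" using Xgens_cases by blast
    have hP: "h \<in> carrier (PS n)" using ij xi_in_PS by simp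
    have Eh: "Eprop n h" using ij epsw_xi_gen by (simp add: Eprop_def)
    let ?g = "inv\<^bsub>PS n\<^esub> h"
    have gP: "?g \<in> carrier (PS n)" using PS_inv_in[OF hP] .
    have "epsw (?g [(k, False)]) = eps (k, False)" if k: "k \<in> {1..n}" for k
    proof -
      have c: "?g [(k, False)] \<in> carrier (F n)" using PS_apply_carrier[OF gP gen_carrier[OF k]] .
      have "epsw (?g [(k, False)]) = epsw (h (?g [(k, False)]))"
        using chainPS[OF hP Eh c] by simp
      also have "\<dots> = eps (k, False)" using PS_inv_apply[OF hP gen_carrier[OF k]] by simp
      finally show ?thesis .
    qed
    then show ?case using inv_AG_PS[OF hP] by (simp add: Eprop_def)
  next
    case (eng h1 h2)
    have h1: "h1 \<in> carrier (PS n)" "h2 \<in> carrier (PS n)" using eng.hyps carrier_PS by auto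
    have "epsw ((h1 \<otimes>\<^bsub>PS n\<^esub> h2) [(k, False)]) = eps (k, False)" if k: "k \<in> {1..n}" for k
    proof -
      have c: "h2 [(k, False)] \<in> carrier (F n)" using PS_apply_carrier[OF h1(2) gen_carrier[OF k]] .
      have "epsw ((h1 \<otimes>\<^bsub>PS n\<^esub> h2) [(k, False)]) = epsw (h1 (h2 [(k, False)]))"
        using h1 gen_carrier[OF k] by (simp add: PS_mult_apply)
      also have "\<dots> = epsw (h2 [(k, False)])" using chainPS[OF h1(1) eng.IH(1) c] by simp
      also have "\<dots> = eps (k, False)" using eng.IH(2) k by (simp add: Eprop_def)
      finally show ?thesis .
    qed
    then show ?case by (simp add: Eprop_def mult_AG_PS)
  qed
qed

lemma Mx_mult:
  assumes "\<phi> \<in> carrier (PS n)" "\<psi> \<in> carrier (PS n)" "i \<in> {1..n}"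
  shows "Mx n (\<phi> \<otimes>\<^bsub>PS n\<^esub> \<psi>) i j = (\<Sum>k\<in>{1..n}. Mx n \<psi> i k * Mx n \<phi> k j)"
proof -
  have c: "\<psi> [(i, False)] \<in> carrier (F n)" using PS_apply_carrier[OF assms(2) gen_carrier[OF assms(3)]] .
  have "Mx n (\<phi> \<otimes>\<^bsub>PS n\<^esub> \<psi>) i j = Dw (\<phi> (\<psi> [(i, False)])) j"
    using assms gen_carrier by (simp add: Mx_def PS_mult_apply)
  also have "\<dots> = (\<Sum>k\<in>{1..n}. Mx n \<psi> i k * Mx n \<phi> k j)"
    using chainPS[OF assms(1) Eprop_PS[OF assms(1)] c] by (simp add: Mx_def)
  finally show ?thesis .
qed

lemma Mx_one: "i \<in> {1..n} \<Longrightarrow> Mx n \<one>\<^bsub>PS n\<^esub> i j = (if i = j then 1 else 0)"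
  using gen_carrier by (simp add: Mx_def PS_one_apply Dl_def)

lemma sum_dlt_left: "i \<in> {1..n} \<Longrightarrow> (\<Sum>k\<in>{1..n}. dlt i k * f k) = f i"
proof -
  assume i: "i \<in> {1..n}"
  have "(\<Sum>k\<in>{1..n}. dlt i k * f k) = (\<Sum>k\<in>{1..n}. if i = k then f k else 0)"
    by (rule sum.cong) (auto simp add: dlt_def)
  also have "\<dots> = f i" using i by simp
  finally show ?thesis .
qed

lemma sum_dlt_right: "j \<in> {1..n} \<Longrightarrow> (\<Sum>k\<in>{1..n}. f k * dlt k j) = f j"
proof -
  assume j: "j \<in> {1..n}"
  have "(\<Sum>k\<in>{1..n}. f k * dlt k j) = (\<Sum>k\<in>{1..n}. if k = j then f k else 0)"
    by (rule sum.cong) (auto simp add: dlt_def)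
  also have "\<dots> = f j" using j by simp
  finally show ?thesis .
qed

lemma Mx_xi: assumes "okij n i j" "p \<in> {1..n}"
  shows "Mx n (xi n i j) p r = (if p = i then Dl (j, True) r + eps (j, True) * (Dl (i, False) r + eps (i, False) * Dl (j, False) r)
      else Dl (p, False) r)"
  using assms by (simp add: Mx_def xi_gen)

lemma rc_Mx_xi: assumes "okij n i j" "p \<in> {1..n}"
  shows "rc (Mx n (xi n i j) p r) = dlt p r"
  using assms by (auto simp add: Mx_xi Dl_def eps_def dlt_def okij_def)

lemma rc_Mx_PS: assumes "\<phi> \<in> carrier (PS n)" "i \<in> {1..n}" "j \<in> {1..n}"
  shows "rc (Mx n \<phi> i j) = dlt i j"
proof -
  have "\<phi> \<in> generate (AG n) (Xgens n)" using assms carrier_PS by blast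
  then show ?thesis using assms(2,3)
  proof (induction arbitrary: i j rule: generate.induct)
    case one
    then show ?case by (simp add: one_AG_PS Mx_one dlt_def)
  next
    case (incl h)
    then obtain a b where ij: "okij n a b" "h = xi n a b" using Xgens_cases by blast
    then show ?case using rc_Mx_xi incl by simp
  next
    case (inv h)
    then obtain a b where ij: "okij n a b" "h = xi n a b" using Xgens_cases by blast
    have hP: "h \<in> carrier (PS n)" using ij xi_in_PS by simp
    let ?g = "inv\<^bsub>PS n\<^esub> h"
    have gP: "?g \<in> carrier (PS n)" using PS_inv_in[OF hP] .
    have "Mx n (h \<otimes>\<^bsub>PS n\<^esub> ?g) i j = Mx n \<one>\<^bsub>PS n\<^esub> i j"
      using group.r_inv[OF group_PS hP] by simp
    then have "(\<Sum>k\<in>{1..n}. Mx n ?g i k * Mx n h k j) = (if i = j then 1 else 0)"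
      using Mx_mult[OF hP gP inv.prems(1)] Mx_one[OF inv.prems(1)] by simp
    then have A: "rc (\<Sum>k\<in>{1..n}. Mx n ?g i k * Mx n h k j) = dlt i j"
      by (simp add: dlt_def)
    have "rc (\<Sum>k\<in>{1..n}. Mx n ?g i k * Mx n h k j) = (\<Sum>k\<in>{1..n}. rc (Mx n ?g i k) * dlt k j)"
      unfolding rc_sum rc_simps by (rule sum.cong) (use rc_Mx_xi[OF ij(1)] ij(2) in auto)
    also have "\<dots> = rc (Mx n ?g i j)" by (rule sum_dlt_right[OF inv.prems(2)])
    finally have "rc (Mx n ?g i j) = dlt i j" using A by simp
    then show ?case using inv_AG_PS[OF hP] by simp
  next
    case (eng h1 h2)
    have h: "h1 \<in> carrier (PS n)" "h2 \<in> carrier (PS n)" using eng.hyps carrier_PS by auto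
    have "rc (Mx n (h1 \<otimes>\<^bsub>PS n\<^esub> h2) i j) = (\<Sum>k\<in>{1..n}. rc (Mx n h2 i k) * rc (Mx n h1 k j))"
      using Mx_mult[OF h eng.prems(1)] by (simp add: rc_sum)
    also have "\<dots> = (\<Sum>k\<in>{1..n}. dlt i k * dlt k j)"
      by (rule sum.cong) (use eng.IH eng.prems in auto)
    also have "\<dots> = dlt i j" using sum_dlt_left[OF eng.prems(1)] by simp
    finally show ?case by (simp add: mult_AG_PS)
  qed
qed

definition linM :: "nat \<Rightarrow> (word \<Rightarrow> word) \<Rightarrow> nat \<Rightarrow> nat \<Rightarrow> nat \<Rightarrow> int" where
  "linM n \<phi> i j u = (if i \<in> {1..n} \<and> j \<in> {1..n} then rl (Mx n \<phi> i j) u else 0)"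

definition quadM :: "nat \<Rightarrow> (word \<Rightarrow> word) \<Rightarrow> nat \<Rightarrow> nat \<Rightarrow> nat \<Rightarrow> nat \<Rightarrow> int" where
  "quadM n \<phi> i j u v = (if i \<in> {1..n} \<and> j \<in> {1..n} then rq (Mx n \<phi> i j) u v else 0)"

definition star :: "nat \<Rightarrow> (nat \<Rightarrow> nat \<Rightarrow> nat \<Rightarrow> int) \<Rightarrow> (nat \<Rightarrow> nat \<Rightarrow> nat \<Rightarrow> int) \<Rightarrow> nat \<Rightarrow> nat \<Rightarrow> nat \<Rightarrow> nat \<Rightarrow> int" where
  "star n A B i j u v = (\<Sum>k\<in>{1..n}. A i k u * B k j v + A i k v * B k j u)"

lemma linM_mult: assumes "\<phi> \<in> carrier (PS n)" "\<psi> \<in> carrier (PS n)"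
  shows "linM n (\<phi> \<otimes>\<^bsub>PS n\<^esub> \<psi>) i j u = linM n \<psi> i j u + linM n \<phi> i j u"
proof (cases "i \<in> {1..n} \<and> j \<in> {1..n}")
  case True
  then have i: "i \<in> {1..n}" and j: "j \<in> {1..n}" by auto
  have "rl (Mx n (\<phi> \<otimes>\<^bsub>PS n\<^esub> \<psi>) i j) u =
     (\<Sum>k\<in>{1..n}. dlt i k * rl (Mx n \<phi> k j) u + rl (Mx n \<psi> i k) u * dlt k j)"
    unfolding Mx_mult[OF assms i] rl_sum
    by (rule sum.cong) (use assms i j rc_Mx_PS in auto)
  also have "\<dots> = rl (Mx n \<phi> i j) u + rl (Mx n \<psi> i j) u"
    by (simp only: sum.distrib sum_dlt_left[OF i] sum_dlt_right[OF j])
  finally show ?thesis unfolding linM_def if_P[OF True] by simp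
next
  case False then show ?thesis unfolding linM_def if_not_P[OF False] by simp
qed

lemma quadM_mult: assumes "\<phi> \<in> carrier (PS n)" "\<psi> \<in> carrier (PS n)"
  shows "quadM n (\<phi> \<otimes>\<^bsub>PS n\<^esub> \<psi>) i j u v =
    quadM n \<psi> i j u v + quadM n \<phi> i j u v + star n (linM n \<psi>) (linM n \<phi>) i j u v"
proof (cases "i \<in> {1..n} \<and> j \<in> {1..n}")
  case True
  then have i: "i \<in> {1..n}" and j: "j \<in> {1..n}" by auto
  have "rq (Mx n (\<phi> \<otimes>\<^bsub>PS n\<^esub> \<psi>) i j) u v =
     (\<Sum>k\<in>{1..n}. dlt i k * rq (Mx n \<phi> k j) u v + rq (Mx n \<psi> i k) u v * dlt k j
        + (linM n \<psi> i k u * linM n \<phi> k j v + linM n \<psi> i k v * linM n \<phi> k j u))"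
    unfolding Mx_mult[OF assms i] rq_sum
    by (rule sum.cong) (use assms i j rc_Mx_PS in \<open>auto simp add: linM_def\<close>)
  also have "\<dots> = rq (Mx n \<phi> i j) u v + rq (Mx n \<psi> i j) u v + star n (linM n \<psi>) (linM n \<phi>) i j u v"
    by (simp only: sum.distrib sum_dlt_left[OF i] sum_dlt_right[OF j] star_def)
  finally show ?thesis unfolding quadM_def if_P[OF True] by simp
next
  case False
  have "star n (linM n \<psi>) (linM n \<phi>) i j u v = 0"
  proof (cases "i \<in> {1..n}")
    case True
    then have "j \<notin> {1..n}" using False by blast
    then show ?thesis unfolding star_def linM_def if_not_P[OF \<open>j \<notin> {1..n}\<close>]
      by (simp del: atLeastAtMost_iff)
  next
    case False
    then show ?thesis unfolding star_def linM_def if_not_P[OF \<open>i \<notin> {1..n}\<close>]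
      by (simp del: atLeastAtMost_iff)
  qed
  then show ?thesis unfolding quadM_def if_not_P[OF False] by simp
qed

lemma linM_one: "linM n \<one>\<^bsub>PS n\<^esub> i j u = 0"
  by (simp add: linM_def Mx_one)

lemma quadM_one: "quadM n \<one>\<^bsub>PS n\<^esub> i j u v = 0"
  by (simp add: quadM_def Mx_one)

definition lin_xi :: "nat \<Rightarrow> nat \<Rightarrow> nat \<Rightarrow> nat \<Rightarrow> nat \<Rightarrow> int" where
  "lin_xi a b p r u = (if p = a \<and> r = a then - dlt u b else if p = a \<and> r = b then dlt u a else 0)"

lemma linM_xi: assumes "okij n a b"
  shows "linM n (xi n a b) p r u = lin_xi a b p r u"
proof (cases "p \<in> {1..n} \<and> r \<in> {1..n}")
  case True
  then show ?thesis using assms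
    by (auto simp add: linM_def Mx_xi lin_xi_def Dl_def eps_def dlt_def okij_def)
next
  case False then show ?thesis using assms by (auto simp add: linM_def lin_xi_def okij_def)
qed


context group
begin

lemma cancel_l1: "g \<in> carrier G \<Longrightarrow> x \<in> carrier G \<Longrightarrow> inv g \<otimes> (g \<otimes> x) = x"
  by (simp add: m_assoc[symmetric])

lemma cancel_l2: "g \<in> carrier G \<Longrightarrow> x \<in> carrier G \<Longrightarrow> g \<otimes> (inv g \<otimes> x) = x"
  by (simp add: m_assoc[symmetric])

lemma comm_closed[simp]: "a \<in> carrier G \<Longrightarrow> b \<in> carrier G \<Longrightarrow> comm G a b \<in> carrier G"
  by (simp add: comm_def)

lemma comm_expand: "a \<in> carrier G \<Longrightarrow> b \<in> carrier G \<Longrightarrow>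
  comm G a b = inv a \<otimes> (inv b \<otimes> (a \<otimes> b))"
  by (simp add: comm_def m_assoc)

lemma comm_conj:
  assumes "g \<in> carrier G" "a \<in> carrier G" "b \<in> carrier G"
  shows "g \<otimes> comm G a b \<otimes> inv g = comm G (g \<otimes> a \<otimes> inv g) (g \<otimes> b \<otimes> inv g)"
  using assms by (simp add: comm_expand inv_mult_group m_assoc cancel_l1 cancel_l2)

lemma comm_inv: "a \<in> carrier G \<Longrightarrow> b \<in> carrier G \<Longrightarrow> inv (comm G a b) = comm G b a"
  by (simp add: comm_expand inv_mult_group m_assoc)

lemma comm_mult_left:
  assumes "x \<in> carrier G" "y \<in> carrier G" "b \<in> carrier G"
  shows "comm G (x \<otimes> y) b = (inv y \<otimes> comm G x b \<otimes> y) \<otimes> comm G y b"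
  using assms by (simp add: comm_expand inv_mult_group m_assoc cancel_l1 cancel_l2)

lemma comm_inv_left:
  assumes "x \<in> carrier G" "b \<in> carrier G"
  shows "comm G (inv x) b = inv (inv x) \<otimes> inv (comm G x b) \<otimes> inv x"
  using assms by (simp add: comm_expand inv_mult_group m_assoc cancel_l1 cancel_l2)

lemma conj_as_comm:
  assumes "c \<in> carrier G" "y \<in> carrier G"
  shows "inv y \<otimes> c \<otimes> y = c \<otimes> comm G c y"
  using assms by (simp add: comm_expand m_assoc cancel_l1 cancel_l2)

lemma comm_commute:
  assumes "x \<in> carrier G" "y \<in> carrier G" "x \<otimes> y = y \<otimes> x"
  shows "comm G x y = \<one>"
proof -
  have "comm G x y = inv x \<otimes> (inv y \<otimes> (y \<otimes> x))" using assms by (simp add: comm_expand)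
  also have "\<dots> = \<one>" using assms by (simp add: cancel_l1)
  finally show ?thesis .
qed

lemma comm_one_left: "b \<in> carrier G \<Longrightarrow> comm G \<one> b = \<one>"
  by (simp add: comm_expand)

lemma comm_self: "a \<in> carrier G \<Longrightarrow> comm G a a = \<one>"
  by (rule comm_commute) auto

lemma comm_mult_sym: "x \<in> carrier G \<Longrightarrow> y \<in> carrier G \<Longrightarrow> x \<otimes> y = y \<otimes> x \<otimes> comm G x y"
  by (simp add: comm_expand m_assoc cancel_l2)

lemma lcs2: "lcs G 2 = generate G {comm G a b | a b. a \<in> carrier G \<and> b \<in> carrier G}"
  by (simp add: numeral_2_eq_2)

lemma lcs3: "lcs G 3 = generate G {comm G a b | a b. a \<in> carrier G \<and> b \<in> lcs G 2}"
  by (simp add: numeral_3_eq_3 numeral_2_eq_2)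

lemma C2_sub: "{comm G a b | a b. a \<in> carrier G \<and> b \<in> carrier G} \<subseteq> carrier G"
  by auto

lemma subgroup2: "subgroup (lcs G 2) G"
  unfolding lcs2 by (rule generate_is_subgroup[OF C2_sub])

lemma lcs2_carrier: "x \<in> lcs G 2 \<Longrightarrow> x \<in> carrier G"
  using subgroup.subset[OF subgroup2] by blast

lemma C3_sub: "{comm G a b | a b. a \<in> carrier G \<and> b \<in> lcs G 2} \<subseteq> lcs G 2"
proof
  fix x assume "x \<in> {comm G a b | a b. a \<in> carrier G \<and> b \<in> lcs G 2}"
  then obtain a b where ab: "x = comm G a b" "a \<in> carrier G" "b \<in> lcs G 2" by blast
  have "b \<in> carrier G" using lcs2_carrier ab(3) .
  then show "x \<in> lcs G 2" unfolding lcs2 using ab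
    by (intro generate.incl) blast
qed

lemma subgroup3: "subgroup (lcs G 3) G"
  unfolding lcs3 using C3_sub lcs2_carrier by (intro generate_is_subgroup) blast

lemma lcs3_sub2: "lcs G 3 \<subseteq> lcs G 2"
  unfolding lcs3 by (rule generate_subgroup_incl[OF C3_sub subgroup2])

lemma lcs3_carrier: "x \<in> lcs G 3 \<Longrightarrow> x \<in> carrier G"
  using lcs3_sub2 lcs2_carrier by blast

lemma normal2: "lcs G 2 \<lhd> G"
  unfolding lcs2
proof (rule normal_generateI[OF C2_sub])
  fix h g assume h: "h \<in> {comm G a b | a b. a \<in> carrier G \<and> b \<in> carrier G}" and g: "g \<in> carrier G"
  then obtain a b where ab: "h = comm G a b" "a \<in> carrier G" "b \<in> carrier G" by blast
  show "g \<otimes> h \<otimes> inv g \<in> {comm G a b | a b. a \<in> carrier G \<and> b \<in> carrier G}"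
    using comm_conj[OF g ab(2,3)] ab g by blast
qed

lemma normal3: "lcs G 3 \<lhd> G"
  unfolding lcs3
proof (rule normal_generateI)
  show "{comm G a b | a b. a \<in> carrier G \<and> b \<in> lcs G 2} \<subseteq> carrier G"
    using C3_sub lcs2_carrier by blast
next
  fix h g assume h: "h \<in> {comm G a b | a b. a \<in> carrier G \<and> b \<in> lcs G 2}" and g: "g \<in> carrier G"
  then obtain a b where ab: "h = comm G a b" "a \<in> carrier G" "b \<in> lcs G 2" by blast
  have "g \<otimes> b \<otimes> inv g \<in> lcs G 2"
    using normal_inv_iff[of "lcs G 2"] normal2 g ab(3) by blast
  then show "g \<otimes> h \<otimes> inv g \<in> {comm G a b | a b. a \<in> carrier G \<and> b \<in> lcs G 2}"
    using comm_conj[OF g ab(2) lcs2_carrier[OF ab(3)]] ab g by blast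
qed

lemma comm_in_lcs2: "a \<in> carrier G \<Longrightarrow> b \<in> carrier G \<Longrightarrow> comm G a b \<in> lcs G 2"
  unfolding lcs2 by (rule generate.incl) blast

lemma comm_in_lcs3: "a \<in> carrier G \<Longrightarrow> b \<in> lcs G 2 \<Longrightarrow> comm G a b \<in> lcs G 3"
  unfolding lcs3 by (rule generate.incl) blast

lemma normal3': "lcs G 3 \<lhd> G\<lparr>carrier := lcs G 2\<rparr>"
  by (rule normal_restrict_supergroup[OF subgroup2 normal3 lcs3_sub2])

lemma group_gr2: "group (gr2 G)"
  unfolding gr2_def by (rule normal.factorgroup_is_group[OF normal3'])

lemma r_coset_restr: "r_coset (G\<lparr>carrier := H\<rparr>) = r_coset G"
  by (simp add: r_coset_def[abs_def])

lemma set_mult_restr: "set_mult (G\<lparr>carrier := H\<rparr>) = set_mult G"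
  by (simp add: set_mult_def[abs_def])

lemma carrier_gr2: "carrier (gr2 G) = (\<lambda>x. lcs G 3 #> x) ` lcs G 2"
  unfolding gr2_def carrier_FactGroup by (simp add: r_coset_restr)

lemma mult_gr2: "U \<otimes>\<^bsub>gr2 G\<^esub> V = U <#> V"
  by (simp add: gr2_def set_mult_restr)

lemma one_gr2: "\<one>\<^bsub>gr2 G\<^esub> = lcs G 3"
  by (simp add: gr2_def)

lemma pi_in: "x \<in> lcs G 2 \<Longrightarrow> lcs G 3 #> x \<in> carrier (gr2 G)"
  by (simp add: carrier_gr2)

lemma pi_mult: "x \<in> lcs G 2 \<Longrightarrow> y \<in> lcs G 2 \<Longrightarrow>
  lcs G 3 #> (x \<otimes> y) = (lcs G 3 #> x) \<otimes>\<^bsub>gr2 G\<^esub> (lcs G 3 #> y)"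
  using normal.rcos_sum[OF normal3 lcs2_carrier lcs2_carrier] by (simp add: mult_gr2)

lemma pi_one: "lcs G 3 #> \<one> = \<one>\<^bsub>gr2 G\<^esub>"
  using subgroup.subset[OF subgroup3] by (simp add: one_gr2)

lemma pi_inv: assumes "x \<in> lcs G 2"
  shows "lcs G 3 #> (inv x) = inv\<^bsub>gr2 G\<^esub> (lcs G 3 #> x)"
proof -
  have ix: "inv x \<in> lcs G 2" using subgroup.m_inv_closed[OF subgroup2 assms] .
  have "(lcs G 3 #> (inv x)) \<otimes>\<^bsub>gr2 G\<^esub> (lcs G 3 #> x) = \<one>\<^bsub>gr2 G\<^esub>"
    using pi_mult[OF ix assms, symmetric] lcs2_carrier[OF assms] pi_one by simp
  then show ?thesis
    using group.inv_equality[OF group_gr2] pi_in[OF ix] pi_in[OF assms] by metis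
qed

lemma pi_absorb_right: assumes "x \<in> lcs G 2" "h \<in> lcs G 3"
  shows "lcs G 3 #> (x \<otimes> h) = lcs G 3 #> x"
proof -
  have h2: "h \<in> lcs G 2" using assms(2) lcs3_sub2 by blast
  have "lcs G 3 #> h = lcs G 3"
    using subgroup.rcos_const[OF subgroup3 is_group assms(2)] .
  then have "lcs G 3 #> h = \<one>\<^bsub>gr2 G\<^esub>" by (simp add: one_gr2)
  then show ?thesis
    using pi_mult[OF assms(1) h2] monoid.r_one[OF group.is_monoid[OF group_gr2] pi_in[OF assms(1)]] by simp
qed

lemma pi_conj: assumes "c \<in> lcs G 2" "y \<in> carrier G"
  shows "lcs G 3 #> (inv y \<otimes> c \<otimes> y) = lcs G 3 #> c"
proof -
  have c: "c \<in> carrier G" using lcs2_carrier[OF assms(1)] .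
  have "comm G c y = inv (comm G y c)" using comm_inv[OF assms(2) c] by simp
  moreover have "comm G y c \<in> lcs G 3" using comm_in_lcs3[OF assms(2,1)] .
  ultimately have "comm G c y \<in> lcs G 3" using subgroup.m_inv_closed[OF subgroup3] by simp
  then show ?thesis using conj_as_comm[OF c assms(2)] pi_absorb_right[OF assms(1)] by simp
qed

lemma comm_group_gr2: "comm_group (gr2 G)"
proof (rule group.group_comm_groupI[OF group_gr2])
  fix U V assume U: "U \<in> carrier (gr2 G)" and V: "V \<in> carrier (gr2 G)"
  then obtain x y where xy: "x \<in> lcs G 2" "y \<in> lcs G 2" "U = lcs G 3 #> x" "V = lcs G 3 #> y"
    using U V by (auto simp add: carrier_gr2)
  have xc: "x \<in> carrier G" "y \<in> carrier G" using xy lcs2_carrier by auto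
  have "U \<otimes>\<^bsub>gr2 G\<^esub> V = lcs G 3 #> (x \<otimes> y)" using pi_mult xy by simp
  also have "\<dots> = lcs G 3 #> (y \<otimes> x \<otimes> comm G x y)" using comm_mult_sym[OF xc] by simp
  also have "\<dots> = lcs G 3 #> (y \<otimes> x)"
    using pi_absorb_right[OF subgroup.m_closed[OF subgroup2 xy(2) xy(1)] comm_in_lcs3[OF xc(1) xy(2)]] .
  also have "\<dots> = V \<otimes>\<^bsub>gr2 G\<^esub> U" using pi_mult xy by simp
  finally show "U \<otimes>\<^bsub>gr2 G\<^esub> V = V \<otimes>\<^bsub>gr2 G\<^esub> U" .
qed

lemma span_first:
  assumes S: "subgroup S (gr2 G)" and gen: "carrier G = generate G Xs" and Xs: "Xs \<subseteq> carrier G"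
    and b: "b \<in> carrier G"
    and base: "\<And>s. s \<in> Xs \<Longrightarrow> lcs G 3 #> comm G s b \<in> S"
    and a: "a \<in> carrier G"
  shows "lcs G 3 #> comm G a b \<in> S"
proof -
  have "a \<in> generate G Xs" using a gen by simp
  then show ?thesis
  proof (induction rule: generate.induct)
    case one
    show ?case using comm_one_left[OF b] pi_one subgroup.one_closed[OF S] by simp
  next
    case (incl h) then show ?case using base by simp
  next
    case (inv h)
    have h: "h \<in> carrier G" using inv Xs by blast
    have c2: "inv (comm G h b) \<in> lcs G 2"
      using subgroup.m_inv_closed[OF subgroup2 comm_in_lcs2[OF h b]] .
    have "lcs G 3 #> comm G (inv h) b = lcs G 3 #> (inv (inv h) \<otimes> inv (comm G h b) \<otimes> inv h)"
      using comm_inv_left[OF h b] by simp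
    also have "\<dots> = lcs G 3 #> inv (comm G h b)"
      using pi_conj[OF c2 inv_closed[OF h]] .
    also have "\<dots> = inv\<^bsub>gr2 G\<^esub> (lcs G 3 #> comm G h b)"
      using pi_inv[OF comm_in_lcs2[OF h b]] .
    finally show ?case using subgroup.m_inv_closed[OF S base[OF inv]] by simp
  next
    case (eng h1 h2)
    have h: "h1 \<in> carrier G" "h2 \<in> carrier G" using eng.hyps gen by auto
    have "lcs G 3 #> comm G (h1 \<otimes> h2) b = lcs G 3 #> ((inv h2 \<otimes> comm G h1 b \<otimes> h2) \<otimes> comm G h2 b)"
      using comm_mult_left[OF h b] by simp
    also have "\<dots> = (lcs G 3 #> (inv h2 \<otimes> comm G h1 b \<otimes> h2)) \<otimes>\<^bsub>gr2 G\<^esub> (lcs G 3 #> comm G h2 b)"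
    proof (rule pi_mult)
      show "inv h2 \<otimes> comm G h1 b \<otimes> h2 \<in> lcs G 2"
        using normal_inv_iff[of "lcs G 2"] normal2 inv_closed[OF h(2)] comm_in_lcs2[OF h(1) b] h(2)
        by (metis inv_inv)
      show "comm G h2 b \<in> lcs G 2" using comm_in_lcs2[OF h(2) b] .
    qed
    also have "\<dots> = (lcs G 3 #> comm G h1 b) \<otimes>\<^bsub>gr2 G\<^esub> (lcs G 3 #> comm G h2 b)"
      using pi_conj[OF comm_in_lcs2[OF h(1) b] h(2)] by simp
    finally show ?case using subgroup.m_closed[OF S eng.IH] by simp
  qed
qed

lemma span_all:
  assumes S: "subgroup S (gr2 G)" and gen: "carrier G = generate G Xs" and Xs: "Xs \<subseteq> carrier G"
    and base: "\<And>s t. s \<in> Xs \<Longrightarrow> t \<in> Xs \<Longrightarrow> lcs G 3 #> comm G s t \<in> S"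
  shows "carrier (gr2 G) \<subseteq> S"
proof -
  have swap: "lcs G 3 #> comm G a b \<in> S" if "lcs G 3 #> comm G b a \<in> S" "a \<in> carrier G" "b \<in> carrier G" for a b
  proof -
    have "lcs G 3 #> comm G a b = inv\<^bsub>gr2 G\<^esub> (lcs G 3 #> comm G b a)"
      using pi_inv[OF comm_in_lcs2[OF that(3,2)]] comm_inv[OF that(3,2)] by simp
    then show ?thesis using subgroup.m_inv_closed[OF S that(1)] by simp
  qed
  have step1: "lcs G 3 #> comm G s b \<in> S" if s: "s \<in> Xs" and b: "b \<in> carrier G" for s b
  proof -
    have "lcs G 3 #> comm G b s \<in> S"
      by (rule span_first[OF S gen Xs _ _ b]) (use s Xs base swap in auto)
    then show ?thesis using swap s Xs b by blast
  qed
  have all: "lcs G 3 #> comm G a b \<in> S" if "a \<in> carrier G" "b \<in> carrier G" for a b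
    by (rule span_first[OF S gen Xs that(2) _ that(1)]) (use step1 that in auto)
  show ?thesis
  proof
    fix Z assume "Z \<in> carrier (gr2 G)"
    then obtain z where z: "z \<in> lcs G 2" "Z = lcs G 3 #> z" by (auto simp add: carrier_gr2)
    have "z \<in> generate G {comm G a b | a b. a \<in> carrier G \<and> b \<in> carrier G}" using z lcs2 by simp
    then have "lcs G 3 #> z \<in> S"
    proof (induction rule: generate.induct)
      case one then show ?case using pi_one subgroup.one_closed[OF S] by simp
    next
      case (incl h) then show ?case using all by blast
    next
      case (inv h)
      then obtain a b where ab: "h = comm G a b" "a \<in> carrier G" "b \<in> carrier G" by blast
      have "lcs G 3 #> inv h = inv\<^bsub>gr2 G\<^esub> (lcs G 3 #> h)"
        using pi_inv comm_in_lcs2 ab by simp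
      then show ?case using subgroup.m_inv_closed[OF S all[OF ab(2,3)]] ab by simp
    next
      case (eng h1 h2)
      then have "h1 \<in> lcs G 2" "h2 \<in> lcs G 2" using lcs2 by auto
      then show ?case using pi_mult subgroup.m_closed[OF S eng.IH] by simp
    qed
    then show "Z \<in> S" using z by simp
  qed
qed

end

lemma additive_pow:
  assumes Q: "group Q" and add: "\<And>x y. x \<in> carrier Q \<Longrightarrow> y \<in> carrier Q \<Longrightarrow> f (x \<otimes>\<^bsub>Q\<^esub> y) = f x + f y"
    and x: "x \<in> carrier Q"
  shows "f (x [^]\<^bsub>Q\<^esub> (k::int)) = k * (f x :: int)"
proof -
  interpret group Q by fact
  have f1: "f \<one>\<^bsub>Q\<^esub> = 0" using add[of "\<one>\<^bsub>Q\<^esub>" "\<one>\<^bsub>Q\<^esub>"] by simp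
  have fn: "f (x [^]\<^bsub>Q\<^esub> (m::nat)) = int m * f x" for m
  proof (induction m)
    case 0 then show ?case using f1 by simp
  next
    case (Suc m) then show ?case using add[of "x [^]\<^bsub>Q\<^esub> m" x] x by (simp add: algebra_simps)
  qed
  have finv: "f (inv\<^bsub>Q\<^esub> y) = - f y" if "y \<in> carrier Q" for y
    using add[of y "inv\<^bsub>Q\<^esub> y"] that f1 by simp
  show ?thesis
  proof (cases "k < 0")
    case True
    define m where "m = nat (-k)"
    have k: "k = - int m" using True by (simp add: m_def)
    have e: "x [^]\<^bsub>Q\<^esub> k = inv\<^bsub>Q\<^esub> (x [^]\<^bsub>Q\<^esub> m)"
      unfolding k by (rule int_pow_neg_int[OF x])
    have c: "x [^]\<^bsub>Q\<^esub> m \<in> carrier Q" using x by (rule nat_pow_closed)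
    have "f (x [^]\<^bsub>Q\<^esub> k) = - (int m * f x)" unfolding e finv[OF c] fn ..
    then show ?thesis unfolding k by simp
  next
    case False
    define m where "m = nat k"
    have k: "k = int m" using False by (simp add: m_def)
    have e: "x [^]\<^bsub>Q\<^esub> k = x [^]\<^bsub>Q\<^esub> m"
      unfolding k by (rule int_pow_int)
    show ?thesis using e fn[of m] k by simp
  qed
qed

lemma additive_finprod:
  assumes Q: "comm_group Q" and add: "\<And>x y. x \<in> carrier Q \<Longrightarrow> y \<in> carrier Q \<Longrightarrow> f (x \<otimes>\<^bsub>Q\<^esub> y) = f x + f y"
    and A: "finite A" and g: "g \<in> A \<rightarrow> carrier Q"
  shows "f (finprod Q g A) = (\<Sum>a\<in>A. (f (g a) :: int))"
  using A g
proof (induction A rule: finite_induct)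
  case empty
  interpret comm_group Q by fact
  show ?case using add[of "\<one>\<^bsub>Q\<^esub>" "\<one>\<^bsub>Q\<^esub>"] by simp
next
  case (insert a A)
  interpret comm_group Q by fact
  have "finprod Q g (insert a A) = g a \<otimes>\<^bsub>Q\<^esub> finprod Q g A"
    using insert by (intro finprod_insert) auto
  moreover have "g a \<in> carrier Q" "finprod Q g A \<in> carrier Q" using insert.prems by auto
  moreover have "f (finprod Q g A) = (\<Sum>a\<in>A. f (g a))" using insert by auto
  ultimately show ?case using insert.hyps add[of "g a" "finprod Q g A"] by simp
qed

lemma generate_finprod:
  assumes Q: "comm_group Q" and B: "finite B" "B \<subseteq> carrier Q" and x: "x \<in> generate Q B"
  shows "\<exists>c::_ \<Rightarrow> int. c \<in> extensional B \<and> x = finprod Q (\<lambda>b. b [^]\<^bsub>Q\<^esub> c b) B"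
  using x
proof (induction rule: generate.induct)
  case one
  interpret comm_group Q by fact
  let ?c = "restrict (\<lambda>b. 0::int) B"
  have e: "finprod Q (\<lambda>b. b [^]\<^bsub>Q\<^esub> ?c b) B = \<one>\<^bsub>Q\<^esub>"
    by (rule finprod_one_eqI) simp
  show ?case by (intro exI[of _ ?c] conjI restrict_extensional) (simp only: e)
next
  case (incl h)
  interpret comm_group Q by fact
  let ?c = "restrict (\<lambda>b. if h = b then 1::int else 0) B"
  have "finprod Q (\<lambda>b. b [^]\<^bsub>Q\<^esub> ?c b) B = finprod Q (\<lambda>b. if h = b then b else \<one>\<^bsub>Q\<^esub>) B"
  proof (rule finprod_cong')
    show "(\<lambda>b. if h = b then b else \<one>\<^bsub>Q\<^esub>) \<in> B \<rightarrow> carrier Q" using B(2) by auto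
    fix b assume b: "b \<in> B"
    then have bc: "b \<in> carrier Q" using B(2) by blast
    show "b [^]\<^bsub>Q\<^esub> ?c b = (if h = b then b else \<one>\<^bsub>Q\<^esub>)"
      using b bc by simp
  qed simp
  also have "\<dots> = h" by (rule finprod_singleton) (use incl B in auto)
  finally have e: "finprod Q (\<lambda>b. b [^]\<^bsub>Q\<^esub> ?c b) B = h" .
  show ?case by (intro exI[of _ ?c] conjI restrict_extensional) (simp only: e)
next
  case (inv h)
  interpret comm_group Q by fact
  let ?c = "restrict (\<lambda>b. if h = b then -1::int else 0) B"
  have "finprod Q (\<lambda>b. b [^]\<^bsub>Q\<^esub> ?c b) B = finprod Q (\<lambda>b. if h = b then inv\<^bsub>Q\<^esub> b else \<one>\<^bsub>Q\<^esub>) B"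
  proof (rule finprod_cong')
    show "(\<lambda>b. if h = b then inv\<^bsub>Q\<^esub> b else \<one>\<^bsub>Q\<^esub>) \<in> B \<rightarrow> carrier Q" using B(2) by auto
    fix b assume b: "b \<in> B"
    then have bc: "b \<in> carrier Q" using B(2) by blast
    have "b [^]\<^bsub>Q\<^esub> (-1::int) = inv\<^bsub>Q\<^esub> b"
      using int_pow_neg[OF bc, of 1] bc by simp
    then show "b [^]\<^bsub>Q\<^esub> ?c b = (if h = b then inv\<^bsub>Q\<^esub> b else \<one>\<^bsub>Q\<^esub>)"
      using b by simp
  qed simp
  also have "\<dots> = inv\<^bsub>Q\<^esub> h"
    using finprod_singleton[of h B "\<lambda>b. inv\<^bsub>Q\<^esub> b"] inv B by auto
  finally have e: "finprod Q (\<lambda>b. b [^]\<^bsub>Q\<^esub> ?c b) B = inv\<^bsub>Q\<^esub> h" .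
  show ?case by (intro exI[of _ ?c] conjI restrict_extensional) (simp only: e)
next
  case (eng h1 h2)
  interpret comm_group Q by fact
  obtain c1 :: "_ \<Rightarrow> int" where c1': "c1 \<in> extensional B \<and> h1 = finprod Q (\<lambda>b. b [^]\<^bsub>Q\<^esub> c1 b) B"
    using eng.IH(1) by (rule exE)
  obtain c2 :: "_ \<Rightarrow> int" where c2': "c2 \<in> extensional B \<and> h2 = finprod Q (\<lambda>b. b [^]\<^bsub>Q\<^esub> c2 b) B"
    using eng.IH(2) by (rule exE)
  note c1 = conjunct1[OF c1'] conjunct2[OF c1']
  note c2 = conjunct1[OF c2'] conjunct2[OF c2']
  let ?c = "restrict (\<lambda>b. c1 b + c2 b) B"
  have "finprod Q (\<lambda>b. b [^]\<^bsub>Q\<^esub> ?c b) B = finprod Q (\<lambda>b. b [^]\<^bsub>Q\<^esub> c1 b \<otimes>\<^bsub>Q\<^esub> b [^]\<^bsub>Q\<^esub> c2 b) B"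
  proof (rule finprod_cong')
    show "(\<lambda>b. b [^]\<^bsub>Q\<^esub> c1 b \<otimes>\<^bsub>Q\<^esub> b [^]\<^bsub>Q\<^esub> c2 b) \<in> B \<rightarrow> carrier Q"
      using B(2) by auto
    fix b assume b: "b \<in> B"
    then have bc: "b \<in> carrier Q" using B(2) by blast
    show "b [^]\<^bsub>Q\<^esub> ?c b = b [^]\<^bsub>Q\<^esub> c1 b \<otimes>\<^bsub>Q\<^esub> b [^]\<^bsub>Q\<^esub> c2 b"
    proof -
      have "?c b = c1 b + c2 b" using b by simp
      then show ?thesis using int_pow_mult[OF bc, of "c1 b" "c2 b"] by simp
    qed
  qed simp
  also have "\<dots> = h1 \<otimes>\<^bsub>Q\<^esub> h2"
  proof -
    have "(\<lambda>b. b [^]\<^bsub>Q\<^esub> c1 b) \<in> B \<rightarrow> carrier Q" "(\<lambda>b. b [^]\<^bsub>Q\<^esub> c2 b) \<in> B \<rightarrow> carrier Q"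
      using B(2) by auto
    then show ?thesis using c1 c2 by (simp only: finprod_multf)
  qed
  finally have e: "finprod Q (\<lambda>b. b [^]\<^bsub>Q\<^esub> ?c b) B = h1 \<otimes>\<^bsub>Q\<^esub> h2" .
  show ?case by (intro exI[of _ ?c] conjI restrict_extensional) (simp only: e)
qed


lemma star_neg_left: "star n (\<lambda>i j u. - A i j u) B i j u v = - star n A B i j u v"
  unfolding star_def by (subst sum_negf[symmetric]) (rule sum.cong, simp_all add: algebra_simps)

lemma star_neg_right: "star n A (\<lambda>i j u. - B i j u) i j u v = - star n A B i j u v"
  unfolding star_def by (subst sum_negf[symmetric]) (rule sum.cong, simp_all add: algebra_simps)

lemma star_add_left: "star n (\<lambda>i j u. A i j u + A' i j u) B i j u v = star n A B i j u v + star n A' B i j u v"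
  unfolding star_def sum.distrib[symmetric] by (rule sum.cong) (simp_all add: algebra_simps)

lemma star_add_right: "star n A (\<lambda>i j u. B i j u + B' i j u) i j u v = star n A B i j u v + star n A B' i j u v"
  unfolding star_def sum.distrib[symmetric] by (rule sum.cong) (simp_all add: algebra_simps)

lemma star_zero_left: "star n (\<lambda>i j u. 0) B i j u v = 0"
  by (simp add: star_def)

lemma star_zero_right: "star n A (\<lambda>i j u. 0) i j u v = 0"
  by (simp add: star_def)

lemma linM_fun_mult: assumes "\<phi> \<in> carrier (PS n)" "\<psi> \<in> carrier (PS n)"
  shows "linM n (\<phi> \<otimes>\<^bsub>PS n\<^esub> \<psi>) = (\<lambda>i j u. linM n \<psi> i j u + linM n \<phi> i j u)"
  using linM_mult[OF assms] by (intro ext) simp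

lemma linM_inv: assumes "\<phi> \<in> carrier (PS n)"
  shows "linM n (inv\<^bsub>PS n\<^esub> \<phi>) = (\<lambda>i j u. - linM n \<phi> i j u)"
proof (intro ext)
  fix i j u
  have "linM n (\<phi> \<otimes>\<^bsub>PS n\<^esub> inv\<^bsub>PS n\<^esub> \<phi>) i j u = 0"
    using group.r_inv[OF group_PS assms] linM_one by simp
  then show "linM n (inv\<^bsub>PS n\<^esub> \<phi>) i j u = - linM n \<phi> i j u"
    using linM_mult[OF assms PS_inv_in[OF assms]] by simp
qed

lemma quadM_inv: assumes "\<phi> \<in> carrier (PS n)"
  shows "quadM n (inv\<^bsub>PS n\<^esub> \<phi>) i j u v = - quadM n \<phi> i j u v + star n (linM n \<phi>) (linM n \<phi>) i j u v"
proof -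
  have "quadM n (\<phi> \<otimes>\<^bsub>PS n\<^esub> inv\<^bsub>PS n\<^esub> \<phi>) i j u v = 0"
    using group.r_inv[OF group_PS assms] quadM_one by simp
  then show ?thesis
    using quadM_mult[OF assms PS_inv_in[OF assms]] linM_inv[OF assms] star_neg_left[of n "linM n \<phi>"]
    by simp
qed

lemma comm_PS: "comm (PS n) a b = inv\<^bsub>PS n\<^esub> a \<otimes>\<^bsub>PS n\<^esub> inv\<^bsub>PS n\<^esub> b \<otimes>\<^bsub>PS n\<^esub> a \<otimes>\<^bsub>PS n\<^esub> b"
  by (simp add: comm_def)

lemma comm_lin:
  assumes a: "a \<in> carrier (PS n)" and b: "b \<in> carrier (PS n)"
  shows "linM n (comm (PS n) a b) = (\<lambda>i j u. 0)"
proof -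
  have ia: "inv\<^bsub>PS n\<^esub> a \<in> carrier (PS n)" and ib: "inv\<^bsub>PS n\<^esub> b \<in> carrier (PS n)"
    using PS_inv_in a b by auto
  have p1: "inv\<^bsub>PS n\<^esub> a \<otimes>\<^bsub>PS n\<^esub> inv\<^bsub>PS n\<^esub> b \<in> carrier (PS n)" using PS_mult_in[OF ia ib] .
  have p2: "inv\<^bsub>PS n\<^esub> a \<otimes>\<^bsub>PS n\<^esub> inv\<^bsub>PS n\<^esub> b \<otimes>\<^bsub>PS n\<^esub> a \<in> carrier (PS n)" using PS_mult_in[OF p1 a] .
  show ?thesis unfolding comm_PS
    by (simp add: linM_fun_mult[OF p2 b] linM_fun_mult[OF p1 a] linM_fun_mult[OF ia ib] linM_inv a b)
qed

lemma comm_quad: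
  assumes a: "a \<in> carrier (PS n)" and b: "b \<in> carrier (PS n)"
  shows "quadM n (comm (PS n) a b) i j u v =
     star n (linM n b) (linM n a) i j u v - star n (linM n a) (linM n b) i j u v"
proof -
  let ?ia = "inv\<^bsub>PS n\<^esub> a" and ?ib = "inv\<^bsub>PS n\<^esub> b"
  have ia: "?ia \<in> carrier (PS n)" and ib: "?ib \<in> carrier (PS n)"
    using PS_inv_in a b by auto
  let ?p1 = "?ia \<otimes>\<^bsub>PS n\<^esub> ?ib"
  let ?p2 = "?p1 \<otimes>\<^bsub>PS n\<^esub> a"
  have p1: "?p1 \<in> carrier (PS n)" using PS_mult_in[OF ia ib] .
  have p2: "?p2 \<in> carrier (PS n)" using PS_mult_in[OF p1 a] .
  let ?A = "linM n a" and ?B = "linM n b"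
  have l1: "linM n ?p1 = (\<lambda>i j u. - ?B i j u + - ?A i j u)"
    by (simp add: linM_fun_mult[OF ia ib] linM_inv a b)
  have l2: "linM n ?p2 = (\<lambda>i j u. ?A i j u + (- ?B i j u + - ?A i j u))"
    by (simp add: linM_fun_mult[OF p1 a] l1)
  have l2': "linM n ?p2 = (\<lambda>i j u. - ?B i j u)"
    by (simp add: l2)
  have q1: "quadM n ?p1 i j u v = - quadM n b i j u v + star n ?B ?B i j u v
      + (- quadM n a i j u v + star n ?A ?A i j u v) + star n ?B ?A i j u v"
  proof -
    have "quadM n ?p1 i j u v = quadM n ?ib i j u v + quadM n ?ia i j u v + star n (linM n ?ib) (linM n ?ia) i j u v"
      by (rule quadM_mult[OF ia ib])
    also have "star n (linM n ?ib) (linM n ?ia) i j u v = star n ?B ?A i j u v"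
      unfolding linM_inv[OF a] linM_inv[OF b] star_neg_left star_neg_right by simp
    finally show ?thesis by (simp add: quadM_inv a b)
  qed
  have q2: "quadM n ?p2 i j u v = quadM n a i j u v + quadM n ?p1 i j u v - star n ?A ?B i j u v - star n ?A ?A i j u v"
  proof -
    have "quadM n ?p2 i j u v = quadM n a i j u v + quadM n ?p1 i j u v + star n ?A (linM n ?p1) i j u v"
      by (rule quadM_mult[OF p1 a])
    also have "star n ?A (linM n ?p1) i j u v = - star n ?A ?B i j u v - star n ?A ?A i j u v"
      unfolding l1 star_add_right star_neg_right by simp
    finally show ?thesis by simp
  qed
  have "quadM n (?p2 \<otimes>\<^bsub>PS n\<^esub> b) i j u v = quadM n b i j u v + quadM n ?p2 i j u v + star n ?B (linM n ?p2) i j u v"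
    by (rule quadM_mult[OF p2 b])
  also have "star n ?B (linM n ?p2) i j u v = - star n ?B ?B i j u v"
    unfolding l2' star_neg_right by simp
  finally show ?thesis unfolding comm_PS using q1 q2 by simp
qed

definition L2 :: "nat \<Rightarrow> (word \<Rightarrow> word) set" where
  "L2 n = {\<phi> \<in> carrier (PS n). linM n \<phi> = (\<lambda>i j u. 0)}"

definition L3 :: "nat \<Rightarrow> (word \<Rightarrow> word) set" where
  "L3 n = {\<phi> \<in> carrier (PS n). linM n \<phi> = (\<lambda>i j u. 0) \<and> quadM n \<phi> = (\<lambda>i j u v. 0)}"

lemma subgroup_L2: "subgroup (L2 n) (PS n)"
proof (rule group.subgroupI[OF group_PS])
  show "L2 n \<subseteq> carrier (PS n)" by (auto simp add: L2_def)
  have "\<one>\<^bsub>PS n\<^esub> \<in> L2 n" using PS_one_in linM_one by (simp add: L2_def fun_eq_iff)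
  then show "L2 n \<noteq> {}" by blast
  fix a assume "a \<in> L2 n"
  then show "inv\<^bsub>PS n\<^esub> a \<in> L2 n" using PS_inv_in linM_inv by (simp add: L2_def)
next
  fix a b assume "a \<in> L2 n" "b \<in> L2 n"
  then show "a \<otimes>\<^bsub>PS n\<^esub> b \<in> L2 n" using PS_mult_in linM_fun_mult by (simp add: L2_def)
qed

lemma subgroup_L3: "subgroup (L3 n) (PS n)"
proof (rule group.subgroupI[OF group_PS])
  show "L3 n \<subseteq> carrier (PS n)" by (auto simp add: L3_def)
  have "\<one>\<^bsub>PS n\<^esub> \<in> L3 n" using PS_one_in linM_one quadM_one by (simp add: L3_def fun_eq_iff)
  then show "L3 n \<noteq> {}" by blast
  fix a assume a: "a \<in> L3 n"
  then have ac: "a \<in> carrier (PS n)" and la: "linM n a = (\<lambda>i j u. 0)" and qa: "quadM n a = (\<lambda>i j u v. 0)"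
    by (auto simp add: L3_def)
  have "quadM n (inv\<^bsub>PS n\<^esub> a) = (\<lambda>i j u v. 0)"
    using quadM_inv[OF ac] la qa star_zero_left by (intro ext) simp
  then show "inv\<^bsub>PS n\<^esub> a \<in> L3 n" using PS_inv_in[OF ac] linM_inv[OF ac] la by (simp add: L3_def)
next
  fix a b assume a: "a \<in> L3 n" and b: "b \<in> L3 n"
  then have ac: "a \<in> carrier (PS n)" and la: "linM n a = (\<lambda>i j u. 0)" and qa: "quadM n a = (\<lambda>i j u v. 0)"
    and bc: "b \<in> carrier (PS n)" and lb: "linM n b = (\<lambda>i j u. 0)" and qb: "quadM n b = (\<lambda>i j u v. 0)"
    by (auto simp add: L3_def)
  have "quadM n (a \<otimes>\<^bsub>PS n\<^esub> b) = (\<lambda>i j u v. 0)"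
    using quadM_mult[OF ac bc] la lb qa qb star_zero_left by (intro ext) simp
  then show "a \<otimes>\<^bsub>PS n\<^esub> b \<in> L3 n" using PS_mult_in[OF ac bc] linM_fun_mult[OF ac bc] la lb
    by (simp add: L3_def)
qed

lemma lcs2_L2: "lcs (PS n) 2 \<subseteq> L2 n"
  unfolding group.lcs2[OF group_PS]
proof (rule group.generate_subgroup_incl[OF group_PS _ subgroup_L2])
  show "{comm (PS n) a b | a b. a \<in> carrier (PS n) \<and> b \<in> carrier (PS n)} \<subseteq> L2 n"
  proof
    fix x assume "x \<in> {comm (PS n) a b | a b. a \<in> carrier (PS n) \<and> b \<in> carrier (PS n)}"
    then obtain a b where ab: "x = comm (PS n) a b" "a \<in> carrier (PS n)" "b \<in> carrier (PS n)" by blast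
    then show "x \<in> L2 n" using comm_lin[OF ab(2,3)] group.comm_closed[OF group_PS ab(2,3)]
      by (simp add: L2_def)
  qed
qed

lemma lcs3_L3: "lcs (PS n) 3 \<subseteq> L3 n"
  unfolding group.lcs3[OF group_PS]
proof (rule group.generate_subgroup_incl[OF group_PS _ subgroup_L3])
  show "{comm (PS n) a b | a b. a \<in> carrier (PS n) \<and> b \<in> lcs (PS n) 2} \<subseteq> L3 n"
  proof
    fix x assume "x \<in> {comm (PS n) a b | a b. a \<in> carrier (PS n) \<and> b \<in> lcs (PS n) 2}"
    then obtain a b where ab: "x = comm (PS n) a b" "a \<in> carrier (PS n)" "b \<in> lcs (PS n) 2" by blast
    have bL: "b \<in> L2 n" using ab(3) lcs2_L2 by blast
    then have bc: "b \<in> carrier (PS n)" and lb: "linM n b = (\<lambda>i j u. 0)" by (auto simp add: L2_def)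
    have "quadM n x = (\<lambda>i j u v. 0)"
      using comm_quad[OF ab(2) bc] lb star_zero_left star_zero_right ab(1) by (intro ext) simp
    then show "x \<in> L3 n" using comm_lin[OF ab(2) bc] group.comm_closed[OF group_PS ab(2) bc] ab(1)
      by (simp add: L3_def)
  qed
qed

definition Psi :: "nat \<Rightarrow> (word \<Rightarrow> word) set \<Rightarrow> nat \<Rightarrow> nat \<Rightarrow> nat \<Rightarrow> nat \<Rightarrow> int" where
  "Psi n U i j u v = quadM n (SOME x. x \<in> U) i j u v"

lemma Psi_coset: assumes x: "x \<in> carrier (PS n)"
  shows "Psi n (lcs (PS n) 3 #>\<^bsub>PS n\<^esub> x) i j u v = quadM n x i j u v"
proof -
  let ?U = "lcs (PS n) 3 #>\<^bsub>PS n\<^esub> x"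
  have one3: "\<one>\<^bsub>PS n\<^esub> \<in> lcs (PS n) 3"
    using subgroup.one_closed[OF group.subgroup3[OF group_PS]] .
  have "\<one>\<^bsub>PS n\<^esub> \<otimes>\<^bsub>PS n\<^esub> x \<in> ?U" using one3 by (auto simp add: r_coset_def)
  then have ex: "\<exists>y. y \<in> ?U" by blast
  have "(SOME y. y \<in> ?U) \<in> ?U" using someI_ex[OF ex] .
  then obtain h where h: "h \<in> lcs (PS n) 3" "(SOME y. y \<in> ?U) = h \<otimes>\<^bsub>PS n\<^esub> x"
    by (auto simp add: r_coset_def)
  have hL: "h \<in> L3 n" using h(1) lcs3_L3 by blast
  then have hc: "h \<in> carrier (PS n)" and lh: "linM n h = (\<lambda>i j u. 0)" and qh: "quadM n h = (\<lambda>i j u v. 0)"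
    by (auto simp add: L3_def)
  show ?thesis unfolding Psi_def h(2) quadM_mult[OF hc x] lh qh star_zero_right by simp
qed

abbreviation Qn :: "nat \<Rightarrow> (word \<Rightarrow> word) set monoid" where "Qn n \<equiv> gr2 (PS n)"

lemma Psi_mult: assumes U: "U \<in> carrier (Qn n)" and V: "V \<in> carrier (Qn n)"
  shows "Psi n (U \<otimes>\<^bsub>Qn n\<^esub> V) i j u v = Psi n U i j u v + Psi n V i j u v"
proof -
  obtain x where x: "x \<in> lcs (PS n) 2" "U = lcs (PS n) 3 #>\<^bsub>PS n\<^esub> x"
    using U group.carrier_gr2[OF group_PS] by auto
  obtain y where y: "y \<in> lcs (PS n) 2" "V = lcs (PS n) 3 #>\<^bsub>PS n\<^esub> y"
    using V group.carrier_gr2[OF group_PS] by auto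
  have xc: "x \<in> carrier (PS n)" "y \<in> carrier (PS n)" using x y group.lcs2_carrier[OF group_PS] by auto
  have ly: "linM n y = (\<lambda>i j u. 0)" using y(1) lcs2_L2 by (auto simp add: L2_def)
  have "U \<otimes>\<^bsub>Qn n\<^esub> V = lcs (PS n) 3 #>\<^bsub>PS n\<^esub> (x \<otimes>\<^bsub>PS n\<^esub> y)"
    using group.pi_mult[OF group_PS x(1) y(1)] x y by simp
  then have "Psi n (U \<otimes>\<^bsub>Qn n\<^esub> V) i j u v = quadM n (x \<otimes>\<^bsub>PS n\<^esub> y) i j u v"
    using Psi_coset[OF PS_mult_in[OF xc]] by simp
  also have "\<dots> = quadM n y i j u v + quadM n x i j u v"
    unfolding quadM_mult[OF xc] ly star_zero_left by simp
  finally show ?thesis using Psi_coset xc x y by simp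
qed

lemma Psi_comm_class: assumes a: "a \<in> carrier (PS n)" and b: "b \<in> carrier (PS n)"
  shows "Psi n (comm_class (PS n) a b) i j u v =
     star n (linM n b) (linM n a) i j u v - star n (linM n a) (linM n b) i j u v"
  unfolding comm_class_def
  using Psi_coset[OF group.comm_closed[OF group_PS a b]] comm_quad[OF a b] by simp


lemma gsub_xfun_F: "gsub (xfun a b) (m, False) = (if m = a then [(b, True), (a, False), (b, False)] else [(m, False)])"
  by (simp add: gsub_def xfun_def)

lemma gsub_xfun_T: "gsub (xfun a b) (m, True) = (if m = a then [(b, True), (a, True), (b, False)] else [(m, True)])"
  by (simp add: gsub_def xfun_def inv_word_def inv_letter_def)

lemma xi_apply_list: "w \<in> carrier (F n) \<Longrightarrow> xi n a b w = reduce (concat (map (gsub (xfun a b)) w))"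
  by (rule xi_apply)

lemma inv_letter_pair[simp]: "inv_letter (k, b) = (k, \<not> b)"
  by (simp add: inv_letter_def)

lemmas xi_comp_simps = gsub_xfun_F gsub_xfun_T carrier_free reduced_def

lemma xi_comm_disjoint:
  assumes ab: "okij n a b" and cd: "okij n c d" and dis: "c \<noteq> a" "c \<noteq> b" "d \<noteq> a" "d \<noteq> b"
  shows "xi n a b \<otimes>\<^bsub>PS n\<^esub> xi n c d = xi n c d \<otimes>\<^bsub>PS n\<^esub> xi n a b"
proof (rule PS_eqI)
  show "xi n a b \<otimes>\<^bsub>PS n\<^esub> xi n c d \<in> carrier (PS n)" "xi n c d \<otimes>\<^bsub>PS n\<^esub> xi n a b \<in> carrier (PS n)"
    using PS_mult_in xi_in_PS ab cd by auto
  fix k assume k: "k \<in> {1..n}"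
  have r: "a \<in> {1..n}" "b \<in> {1..n}" "c \<in> {1..n}" "d \<in> {1..n}" "a \<noteq> b" "c \<noteq> d"
    using ab cd by (auto simp add: okij_def)
  show "(xi n a b \<otimes>\<^bsub>PS n\<^esub> xi n c d) [(k, False)] = (xi n c d \<otimes>\<^bsub>PS n\<^esub> xi n a b) [(k, False)]"
    using k r dis xi_in_PS[OF ab] xi_in_PS[OF cd] gen_carrier[OF k]
    by (simp add: PS_mult_apply xi_gen[OF ab] xi_gen[OF cd] xi_apply_list xi_comp_simps)
qed

lemma xi_comm_same_target:
  assumes ab: "okij n a b" and cb: "okij n c b" and ac: "a \<noteq> c"
  shows "xi n a b \<otimes>\<^bsub>PS n\<^esub> xi n c b = xi n c b \<otimes>\<^bsub>PS n\<^esub> xi n a b"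
proof (rule PS_eqI)
  show "xi n a b \<otimes>\<^bsub>PS n\<^esub> xi n c b \<in> carrier (PS n)" "xi n c b \<otimes>\<^bsub>PS n\<^esub> xi n a b \<in> carrier (PS n)"
    using PS_mult_in xi_in_PS ab cb by auto
  fix k assume k: "k \<in> {1..n}"
  have r: "a \<in> {1..n}" "b \<in> {1..n}" "c \<in> {1..n}" "a \<noteq> b" "c \<noteq> b"
    using ab cb by (auto simp add: okij_def)
  show "(xi n a b \<otimes>\<^bsub>PS n\<^esub> xi n c b) [(k, False)] = (xi n c b \<otimes>\<^bsub>PS n\<^esub> xi n a b) [(k, False)]"
    using k r ac xi_in_PS[OF ab] xi_in_PS[OF cb] gen_carrier[OF k]
    by (simp add: PS_mult_apply xi_gen[OF ab] xi_gen[OF cb] xi_apply_list xi_comp_simps)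
qed

lemma xi_mccool:
  assumes ad: "okij n a d" and bd: "okij n b d" and ab: "okij n a b"
  shows "(xi n a d \<otimes>\<^bsub>PS n\<^esub> xi n b d) \<otimes>\<^bsub>PS n\<^esub> xi n a b = xi n a b \<otimes>\<^bsub>PS n\<^esub> (xi n a d \<otimes>\<^bsub>PS n\<^esub> xi n b d)"
proof (rule PS_eqI)
  have p: "xi n a d \<otimes>\<^bsub>PS n\<^esub> xi n b d \<in> carrier (PS n)" using PS_mult_in xi_in_PS ad bd by auto
  show "(xi n a d \<otimes>\<^bsub>PS n\<^esub> xi n b d) \<otimes>\<^bsub>PS n\<^esub> xi n a b \<in> carrier (PS n)"
    "xi n a b \<otimes>\<^bsub>PS n\<^esub> (xi n a d \<otimes>\<^bsub>PS n\<^esub> xi n b d) \<in> carrier (PS n)"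
    using PS_mult_in[OF p xi_in_PS[OF ab]] PS_mult_in[OF xi_in_PS[OF ab] p] by auto
  fix k assume k: "k \<in> {1..n}"
  have r: "a \<in> {1..n}" "b \<in> {1..n}" "d \<in> {1..n}" "a \<noteq> b" "a \<noteq> d" "b \<noteq> d"
    using ab ad bd by (auto simp add: okij_def)
  have e1: "((xi n a d \<otimes>\<^bsub>PS n\<^esub> xi n b d) \<otimes>\<^bsub>PS n\<^esub> xi n a b) [(k, False)] = xi n a d (xi n b d (xi n a b [(k, False)]))"
    using p xi_in_PS[OF ab] xi_in_PS[OF ad] xi_in_PS[OF bd] gen_carrier[OF k]
    by (simp add: PS_mult_apply PS_apply_carrier)
  have e2: "(xi n a b \<otimes>\<^bsub>PS n\<^esub> (xi n a d \<otimes>\<^bsub>PS n\<^esub> xi n b d)) [(k, False)] = xi n a b (xi n a d (xi n b d [(k, False)]))"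
    using p xi_in_PS[OF ab] xi_in_PS[OF ad] xi_in_PS[OF bd] gen_carrier[OF k]
    by (simp add: PS_mult_apply PS_apply_carrier)
  show "((xi n a d \<otimes>\<^bsub>PS n\<^esub> xi n b d) \<otimes>\<^bsub>PS n\<^esub> xi n a b) [(k, False)] =
        (xi n a b \<otimes>\<^bsub>PS n\<^esub> (xi n a d \<otimes>\<^bsub>PS n\<^esub> xi n b d)) [(k, False)]"
    unfolding e1 e2 using k r
    by (simp add: xi_gen[OF ab] xi_gen[OF ad] xi_gen[OF bd] xi_apply_list xi_comp_simps)
qed


definition Bset :: "nat \<Rightarrow> (word \<Rightarrow> word) set set" where
  "Bset n = {comm_class (PS n) (xi n i j) (xi n j i) | i j. 1 \<le> i \<and> i < j \<and> j \<le> n}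
              \<union> {comm_class (PS n) (xi n i j) (xi n i t) | i j t.
                   1 \<le> i \<and> i \<le> n \<and> i \<noteq> j \<and> i \<noteq> t \<and> 1 \<le> j \<and> j < t \<and> t \<le> n}"

lemma cc_in_Q: "a \<in> carrier (PS n) \<Longrightarrow> b \<in> carrier (PS n) \<Longrightarrow> comm_class (PS n) a b \<in> carrier (Qn n)"
  unfolding comm_class_def
  by (rule group.pi_in[OF group_PS group.comm_in_lcs2[OF group_PS]])

lemma cc_swap: assumes "a \<in> carrier (PS n)" "b \<in> carrier (PS n)"
  shows "comm_class (PS n) a b = inv\<^bsub>Qn n\<^esub> (comm_class (PS n) b a)"
  unfolding comm_class_def
  using group.pi_inv[OF group_PS group.comm_in_lcs2[OF group_PS assms(2,1)]]
    group.comm_inv[OF group_PS assms(2,1)] by simp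

lemma cc_commute: assumes "a \<in> carrier (PS n)" "b \<in> carrier (PS n)" "a \<otimes>\<^bsub>PS n\<^esub> b = b \<otimes>\<^bsub>PS n\<^esub> a"
  shows "comm_class (PS n) a b = \<one>\<^bsub>Qn n\<^esub>"
  unfolding comm_class_def
  using group.comm_commute[OF group_PS assms] group.pi_one[OF group_PS] by simp

lemma Bset_sub: "Bset n \<subseteq> carrier (Qn n)"
proof
  fix U assume "U \<in> Bset n"
  then obtain a b c d where "U = comm_class (PS n) (xi n a b) (xi n c d)" "okij n a b" "okij n c d"
    unfolding Bset_def okij_def by fastforce
  then show "U \<in> carrier (Qn n)" using cc_in_Q xi_in_PS by simp
qed

abbreviation Sg :: "nat \<Rightarrow> (word \<Rightarrow> word) set set" where "Sg n \<equiv> generate (Qn n) (Bset n)"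

lemma group_Q: "group (Qn n)"
  by (rule group.group_gr2[OF group_PS])

lemma subgroup_Sg: "subgroup (Sg n) (Qn n)"
  by (rule group.generate_is_subgroup[OF group_Q Bset_sub])

lemma Sg_inv: "x \<in> Sg n \<Longrightarrow> inv\<^bsub>Qn n\<^esub> x \<in> Sg n"
  by (rule subgroup.m_inv_closed[OF subgroup_Sg])

lemma Bset_Sg: "x \<in> Bset n \<Longrightarrow> x \<in> Sg n"
  by (rule generate.incl)

lemma ccX: assumes ab: "okij n a b" shows "comm_class (PS n) (xi n a b) (xi n b a) \<in> Sg n"
proof -
  have ba: "okij n b a" using ab by (auto simp add: okij_def)
  have r: "1 \<le> a" "a \<le> n" "1 \<le> b" "b \<le> n" "a \<noteq> b" using ab by (auto simp add: okij_def)
  show ?thesis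
  proof (cases "a < b")
    case True
    then have "comm_class (PS n) (xi n a b) (xi n b a) \<in> Bset n"
      unfolding Bset_def using r by blast
    then show ?thesis by (rule Bset_Sg)
  next
    case False
    then have "b < a" using r by simp
    then have "comm_class (PS n) (xi n b a) (xi n a b) \<in> Bset n"
      unfolding Bset_def using r by blast
    then show ?thesis using cc_swap[OF xi_in_PS[OF ab] xi_in_PS[OF ba]] Sg_inv Bset_Sg by simp
  qed
qed

lemma ccY: assumes ab: "okij n a b" and ad: "okij n a d" and bd: "b \<noteq> d"
  shows "comm_class (PS n) (xi n a b) (xi n a d) \<in> Sg n"
proof -
  have r: "1 \<le> a" "a \<le> n" "1 \<le> b" "b \<le> n" "a \<noteq> b" "1 \<le> d" "d \<le> n" "a \<noteq> d"
    using ab ad by (auto simp add: okij_def)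
  show ?thesis
  proof (cases "b < d")
    case True
    then have "comm_class (PS n) (xi n a b) (xi n a d) \<in> Bset n"
      unfolding Bset_def using r by blast
    then show ?thesis by (rule Bset_Sg)
  next
    case False
    then have "d < b" using bd by simp
    then have "comm_class (PS n) (xi n a d) (xi n a b) \<in> Bset n"
      unfolding Bset_def using r by blast
    then show ?thesis using cc_swap[OF xi_in_PS[OF ab] xi_in_PS[OF ad]] Sg_inv Bset_Sg by simp
  qed
qed

lemma ccChain: assumes ab: "okij n a b" and bd: "okij n b d" and ad: "okij n a d"
  shows "comm_class (PS n) (xi n a b) (xi n b d) \<in> Sg n"
proof -
  interpret G: group "PS n" by (rule group_PS)
  interpret Q: group "Qn n" by (rule group_Q)
  let ?x = "xi n a d" and ?y = "xi n b d" and ?z = "xi n a b"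
  have x: "?x \<in> carrier (PS n)" and y: "?y \<in> carrier (PS n)" and z: "?z \<in> carrier (PS n)"
    using xi_in_PS ab bd ad by auto
  have xy: "?x \<otimes>\<^bsub>PS n\<^esub> ?y \<in> carrier (PS n)" using PS_mult_in[OF x y] .
  have "comm (PS n) (?x \<otimes>\<^bsub>PS n\<^esub> ?y) ?z = \<one>\<^bsub>PS n\<^esub>"
    using G.comm_commute[OF xy z xi_mccool[OF ad bd ab]] .
  then have "(inv\<^bsub>PS n\<^esub> ?y \<otimes>\<^bsub>PS n\<^esub> comm (PS n) ?x ?z \<otimes>\<^bsub>PS n\<^esub> ?y) \<otimes>\<^bsub>PS n\<^esub> comm (PS n) ?y ?z = \<one>\<^bsub>PS n\<^esub>"
    using G.comm_mult_left[OF x y z] by simp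
  then have "lcs (PS n) 3 #>\<^bsub>PS n\<^esub> ((inv\<^bsub>PS n\<^esub> ?y \<otimes>\<^bsub>PS n\<^esub> comm (PS n) ?x ?z \<otimes>\<^bsub>PS n\<^esub> ?y) \<otimes>\<^bsub>PS n\<^esub> comm (PS n) ?y ?z)
      = \<one>\<^bsub>Qn n\<^esub>"
    using G.pi_one by simp
  moreover have "inv\<^bsub>PS n\<^esub> ?y \<otimes>\<^bsub>PS n\<^esub> comm (PS n) ?x ?z \<otimes>\<^bsub>PS n\<^esub> ?y \<in> lcs (PS n) 2"
    using G.normal_inv_iff[of "lcs (PS n) 2"] G.normal2 G.inv_closed[OF y] G.comm_in_lcs2[OF x z] y
    by (metis G.inv_inv)
  ultimately have "(lcs (PS n) 3 #>\<^bsub>PS n\<^esub> (inv\<^bsub>PS n\<^esub> ?y \<otimes>\<^bsub>PS n\<^esub> comm (PS n) ?x ?z \<otimes>\<^bsub>PS n\<^esub> ?y))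
      \<otimes>\<^bsub>Qn n\<^esub> comm_class (PS n) ?y ?z = \<one>\<^bsub>Qn n\<^esub>"
    using G.pi_mult[OF _ G.comm_in_lcs2[OF y z]] unfolding comm_class_def by simp
  then have e: "comm_class (PS n) ?x ?z \<otimes>\<^bsub>Qn n\<^esub> comm_class (PS n) ?y ?z = \<one>\<^bsub>Qn n\<^esub>"
    using G.pi_conj[OF G.comm_in_lcs2[OF x z] y] unfolding comm_class_def by simp
  have cx: "comm_class (PS n) ?x ?z \<in> carrier (Qn n)" and cy: "comm_class (PS n) ?y ?z \<in> carrier (Qn n)"
    using cc_in_Q x y z by auto
  have "comm_class (PS n) ?y ?z \<otimes>\<^bsub>Qn n\<^esub> comm_class (PS n) ?x ?z = \<one>\<^bsub>Qn n\<^esub>"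
    using Q.inv_comm[OF e cx cy] .
  then have "inv\<^bsub>Qn n\<^esub> (comm_class (PS n) ?x ?z) = comm_class (PS n) ?y ?z"
    using Q.inv_equality[OF _ cx cy] by simp
  then have "comm_class (PS n) ?z ?y = inv\<^bsub>Qn n\<^esub> (inv\<^bsub>Qn n\<^esub> (comm_class (PS n) ?x ?z))"
    using cc_swap[OF z y] by simp
  also have "\<dots> = comm_class (PS n) ?x ?z" using Q.inv_inv[OF cx] .
  finally have "comm_class (PS n) ?z ?y = comm_class (PS n) ?x ?z" .
  moreover have "comm_class (PS n) ?x ?z \<in> Sg n"
  proof (rule ccY[OF ad ab])
    show "d \<noteq> b" using bd by (auto simp add: okij_def)
  qed
  ultimately show ?thesis by simp
qed

lemma cc_base: assumes ab: "okij n a b" and cd: "okij n c d"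
  shows "comm_class (PS n) (xi n a b) (xi n c d) \<in> Sg n"
proof -
  have r: "a \<in> {1..n}" "b \<in> {1..n}" "c \<in> {1..n}" "d \<in> {1..n}" "a \<noteq> b" "c \<noteq> d"
    using ab cd by (auto simp add: okij_def)
  have one: "\<one>\<^bsub>Qn n\<^esub> \<in> Sg n" by (rule generate.one)
  have s: "xi n a b \<in> carrier (PS n)" "xi n c d \<in> carrier (PS n)" using xi_in_PS ab cd by auto
  show ?thesis
  proof (cases "c = a")
    case ca: True
    show ?thesis
    proof (cases "d = b")
      case True
      then show ?thesis using ca group.comm_self[OF group_PS s(1)] group.pi_one[OF group_PS] one
        by (simp add: comm_class_def)
    next
      case False
      then show ?thesis using ccY[OF ab] cd ca by simp
    qed
  next
    case ca: False
    show ?thesis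
    proof (cases "c = b")
      case cb: True
      show ?thesis
      proof (cases "d = a")
        case True then show ?thesis using ccX[OF ab] cb by simp
      next
        case False
        have ad: "okij n a d" using r False by (auto simp add: okij_def)
        show ?thesis using ccChain[OF ab _ ad] cd cb by simp
      qed
    next
      case cb: False
      show ?thesis
      proof (cases "d = a")
        case da: True
        have ca': "okij n c a" using cd da by simp
        have cb': "okij n c b" using r cb by (auto simp add: okij_def)
        have "comm_class (PS n) (xi n c a) (xi n a b) \<in> Sg n" using ccChain[OF ca' ab cb'] .
        then show ?thesis using cc_swap[OF s] da Sg_inv by simp
      next
        case da: False
        show ?thesis
        proof (cases "d = b")
          case db: True
          have "xi n a b \<otimes>\<^bsub>PS n\<^esub> xi n c d = xi n c d \<otimes>\<^bsub>PS n\<^esub> xi n a b"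
            using xi_comm_same_target[OF ab _ ] cd db ca by simp
          then show ?thesis using cc_commute[OF s] one by simp
        next
          case db: False
          have "xi n a b \<otimes>\<^bsub>PS n\<^esub> xi n c d = xi n c d \<otimes>\<^bsub>PS n\<^esub> xi n a b"
            using xi_comm_disjoint[OF ab cd] ca cb da db by simp
          then show ?thesis using cc_commute[OF s] one by simp
        qed
      qed
    qed
  qed
qed

lemma gen_PS: "carrier (PS n) = generate (PS n) (Xgens n)"
proof -
  have "generate (AG n \<lparr>carrier := generate (AG n) (Xgens n)\<rparr>) (Xgens n) = generate (AG n) (Xgens n)"
    by (rule group.generate_consistent[OF group_AG _ subgroup_PS]) (auto intro: generate.incl)
  then show ?thesis by (simp add: PSigma_alt)
qed

lemma Xgens_PS: "Xgens n \<subseteq> carrier (PS n)"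
  using xi_in_PS Xgens_cases by blast

lemma span: "carrier (Qn n) \<subseteq> Sg n"
proof (rule group.span_all[OF group_PS subgroup_Sg gen_PS Xgens_PS])
  fix s t assume "s \<in> Xgens n" "t \<in> Xgens n"
  then obtain a b c d where "okij n a b" "s = xi n a b" "okij n c d" "t = xi n c d"
    using Xgens_cases by metis
  then show "lcs (PS n) 3 #>\<^bsub>PS n\<^esub> comm (PS n) s t \<in> Sg n"
    using cc_base unfolding comm_class_def by simp
qed


lemma linM_xi_fun: "okij n a b \<Longrightarrow> linM n (xi n a b) = lin_xi a b"
  using linM_xi by (intro ext) simp

lemma Psi_cc: assumes ab: "okij n a b" and cd: "okij n c d"
  shows "Psi n (comm_class (PS n) (xi n a b) (xi n c d)) p r u v =
    star n (lin_xi c d) (lin_xi a b) p r u v - star n (lin_xi a b) (lin_xi c d) p r u v"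
  using Psi_comm_class[OF xi_in_PS[OF ab] xi_in_PS[OF cd]] linM_xi_fun[OF ab] linM_xi_fun[OF cd] by simp

lemma star_xi_left: assumes ab: "okij n a b"
  shows "star n (lin_xi a b) C p r u v =
    (if p = a then - dlt u b * C a r v - dlt v b * C a r u + dlt u a * C b r v + dlt v a * C b r u else 0)"
proof -
  have r: "a \<in> {1..n}" "b \<in> {1..n}" "a \<noteq> b" using ab by (auto simp add: okij_def)
  have "star n (lin_xi a b) C p r u v =
    (\<Sum>k\<in>{1..n}. (if k = a then (if p = a then - dlt u b * C a r v - dlt v b * C a r u else 0) else 0)
               + (if k = b then (if p = a then dlt u a * C b r v + dlt v a * C b r u else 0) else 0))"
    unfolding star_def by (rule sum.cong) (use r in \<open>auto simp add: lin_xi_def\<close>)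
  also have "\<dots> = (if p = a then - dlt u b * C a r v - dlt v b * C a r u else 0)
      + (if p = a then dlt u a * C b r v + dlt v a * C b r u else 0)"
    unfolding sum.distrib using r by simp
  finally show ?thesis by simp
qed

datatype ix = IX nat nat | IY nat nat nat

fun valid :: "nat \<Rightarrow> ix \<Rightarrow> bool" where
  "valid n (IX i j) = (1 \<le> i \<and> i < j \<and> j \<le> n)"
| "valid n (IY i j t) = (1 \<le> i \<and> i \<le> n \<and> i \<noteq> j \<and> i \<noteq> t \<and> 1 \<le> j \<and> j < t \<and> t \<le> n)"

fun el :: "nat \<Rightarrow> ix \<Rightarrow> (word \<Rightarrow> word) set" where
  "el n (IX i j) = comm_class (PS n) (xi n i j) (xi n j i)"
| "el n (IY i j t) = comm_class (PS n) (xi n i j) (xi n i t)"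

fun kap :: "ix \<Rightarrow> nat \<times> nat \<times> nat \<times> nat" where
  "kap (IX i j) = (i, j, i, i)"
| "kap (IY i j t) = (i, t, i, j)"

definition coordv :: "nat \<Rightarrow> (word \<Rightarrow> word) set \<Rightarrow> ix \<Rightarrow> int" where
  "coordv n U \<iota> = (case kap \<iota> of (p, r, u, v) \<Rightarrow> Psi n U p r u v)"

lemma Psi_X: assumes "valid n (IX i j)"
  shows "Psi n (el n (IX i j)) p r u v =
    star n (lin_xi j i) (lin_xi i j) p r u v - star n (lin_xi i j) (lin_xi j i) p r u v"
proof -
  have "okij n i j" "okij n j i" using assms by (auto simp add: okij_def)
  then show ?thesis using Psi_cc by simp
qed

lemma Psi_Y: assumes "valid n (IY i j t)"
  shows "Psi n (el n (IY i j t)) p r u v =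
    star n (lin_xi i t) (lin_xi i j) p r u v - star n (lin_xi i j) (lin_xi i t) p r u v"
proof -
  have "okij n i j" "okij n i t" using assms by (auto simp add: okij_def)
  then show ?thesis using Psi_cc by simp
qed

lemma PsiX_closed: assumes "valid n (IX i j)"
  shows "Psi n (el n (IX i j)) p r u v =
    (if p = j then - dlt u i * lin_xi i j j r v - dlt v i * lin_xi i j j r u + dlt u j * lin_xi i j i r v + dlt v j * lin_xi i j i r u else 0)
  - (if p = i then - dlt u j * lin_xi j i i r v - dlt v j * lin_xi j i i r u + dlt u i * lin_xi j i j r v + dlt v i * lin_xi j i j r u else 0)"
proof -
  have "okij n i j" "okij n j i" using assms by (auto simp add: okij_def)
  then show ?thesis unfolding Psi_X[OF assms] star_xi_left[OF \<open>okij n j i\<close>] star_xi_left[OF \<open>okij n i j\<close>] by simp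
qed

lemma PsiY_closed: assumes "valid n (IY i j t)"
  shows "Psi n (el n (IY i j t)) p r u v =
    (if p = i then - dlt u t * lin_xi i j i r v - dlt v t * lin_xi i j i r u + dlt u i * lin_xi i j t r v + dlt v i * lin_xi i j t r u else 0)
  - (if p = i then - dlt u j * lin_xi i t i r v - dlt v j * lin_xi i t i r u + dlt u i * lin_xi i t j r v + dlt v i * lin_xi i t j r u else 0)"
proof -
  have "okij n i j" "okij n i t" using assms by (auto simp add: okij_def)
  then show ?thesis unfolding Psi_Y[OF assms] star_xi_left[OF \<open>okij n i t\<close>] star_xi_left[OF \<open>okij n i j\<close>] by simp
qed

lemma coord_own: "valid n \<iota> \<Longrightarrow> coordv n (el n \<iota>) \<iota> \<noteq> 0"
proof (cases \<iota>)
  case (IX i j)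
  assume v: "valid n \<iota>"
  then show ?thesis using IX PsiX_closed[of n i j] by (auto simp add: coordv_def lin_xi_def dlt_def)
next
  case (IY i j t)
  assume v: "valid n \<iota>"
  then show ?thesis using IY PsiY_closed[of n i j t] by (auto simp add: coordv_def lin_xi_def dlt_def)
qed

lemma coord_other: "valid n \<iota> \<Longrightarrow> valid n \<iota>' \<Longrightarrow> \<iota> \<noteq> \<iota>' \<Longrightarrow> coordv n (el n \<iota>') \<iota> = 0"
proof (cases \<iota>; cases \<iota>')
  fix i j i' j' assume "\<iota> = IX i j" "\<iota>' = IX i' j'" "valid n \<iota>" "valid n \<iota>'" "\<iota> \<noteq> \<iota>'"
  then show ?thesis using PsiX_closed[of n i' j'] by (auto simp add: coordv_def lin_xi_def dlt_def)
next
  fix i j i' j' t' assume "\<iota> = IX i j" "\<iota>' = IY i' j' t'" "valid n \<iota>" "valid n \<iota>'" "\<iota> \<noteq> \<iota>'"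
  then show ?thesis using PsiY_closed[of n i' j' t'] by (auto simp add: coordv_def lin_xi_def dlt_def)
next
  fix i j t i' j' assume "\<iota> = IY i j t" "\<iota>' = IX i' j'" "valid n \<iota>" "valid n \<iota>'" "\<iota> \<noteq> \<iota>'"
  then show ?thesis using PsiX_closed[of n i' j'] by (auto simp add: coordv_def lin_xi_def dlt_def)
next
  fix i j t i' j' t' assume "\<iota> = IY i j t" "\<iota>' = IY i' j' t'" "valid n \<iota>" "valid n \<iota>'" "\<iota> \<noteq> \<iota>'"
  then show ?thesis using PsiY_closed[of n i' j' t'] by (auto simp add: coordv_def lin_xi_def dlt_def)
qed


lemma Bset_image: "Bset n = el n ` {\<iota>. valid n \<iota>}"
proof
  show "Bset n \<subseteq> el n ` {\<iota>. valid n \<iota>}"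
  proof
    fix U assume "U \<in> Bset n"
    then consider (x) i j where "U = comm_class (PS n) (xi n i j) (xi n j i)" "1 \<le> i \<and> i < j \<and> j \<le> n"
      | (y) i j t where "U = comm_class (PS n) (xi n i j) (xi n i t)"
          "1 \<le> i \<and> i \<le> n \<and> i \<noteq> j \<and> i \<noteq> t \<and> 1 \<le> j \<and> j < t \<and> t \<le> n"
      unfolding Bset_def by blast
    then show "U \<in> el n ` {\<iota>. valid n \<iota>}"
    proof cases
      case x
      then have "U = el n (IX i j)" "valid n (IX i j)" by auto
      then show ?thesis by blast
    next
      case y
      then have "U = el n (IY i j t)" "valid n (IY i j t)" by auto
      then show ?thesis by blast
    qed
  qed
next
  show "el n ` {\<iota>. valid n \<iota>} \<subseteq> Bset n"
  proof
    fix U assume "U \<in> el n ` {\<iota>. valid n \<iota>}"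
    then obtain \<iota> where i: "valid n \<iota>" "U = el n \<iota>" by blast
    show "U \<in> Bset n"
    proof (cases \<iota>)
      case (IX i j)
      then show ?thesis using i unfolding Bset_def by auto
    next
      case (IY i j t)
      then have "U = comm_class (PS n) (xi n i j) (xi n i t)"
        "1 \<le> i \<and> i \<le> n \<and> i \<noteq> j \<and> i \<noteq> t \<and> 1 \<le> j \<and> j < t \<and> t \<le> n"
        using i by auto
      then have "U \<in> {comm_class (PS n) (xi n i j) (xi n i t) | i j t.
                   1 \<le> i \<and> i \<le> n \<and> i \<noteq> j \<and> i \<noteq> t \<and> 1 \<le> j \<and> j < t \<and> t \<le> n}"
        by blast
      then show ?thesis unfolding Bset_def by (rule UnI2)
    qed
  qed
qed

definition PX :: "nat \<Rightarrow> (nat \<times> nat) set" where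
  "PX n = {(i, j). i \<in> {1..n} \<and> j \<in> {1..n} \<and> i < j}"

definition PY :: "nat \<Rightarrow> (nat \<times> nat \<times> nat) set" where
  "PY n = Sigma {1..n} (\<lambda>i. {(j, t). j \<in> {1..n} - {i} \<and> t \<in> {1..n} - {i} \<and> j < t})"

lemma valid_set: "{\<iota>. valid n \<iota>} = (\<lambda>(i, j). IX i j) ` PX n \<union> (\<lambda>(i, j, t). IY i j t) ` PY n"
proof
  show "{\<iota>. valid n \<iota>} \<subseteq> (\<lambda>(i, j). IX i j) ` PX n \<union> (\<lambda>(i, j, t). IY i j t) ` PY n"
  proof
    fix \<iota> assume "\<iota> \<in> {\<iota>. valid n \<iota>}"
    then show "\<iota> \<in> (\<lambda>(i, j). IX i j) ` PX n \<union> (\<lambda>(i, j, t). IY i j t) ` PY n"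
    proof (cases \<iota>)
      case (IX i j)
      then have "(i, j) \<in> PX n" using \<open>\<iota> \<in> _\<close> by (auto simp add: PX_def)
      then show ?thesis using IX by force
    next
      case (IY i j t)
      then have "(i, j, t) \<in> PY n" using \<open>\<iota> \<in> _\<close> by (auto simp add: PY_def)
      then show ?thesis using IY by force
    qed
  qed
next
  show "(\<lambda>(i, j). IX i j) ` PX n \<union> (\<lambda>(i, j, t). IY i j t) ` PY n \<subseteq> {\<iota>. valid n \<iota>}"
    by (auto simp add: PX_def PY_def)
qed

lemma finite_PX: "finite (PX n)"
proof -
  have "PX n \<subseteq> {1..n} \<times> {1..n}" by (auto simp add: PX_def)
  then show ?thesis by (rule finite_subset) simp
qed

lemma finite_PY: "finite (PY n)"
  unfolding PY_def by (rule finite_SigmaI) (auto intro: finite_subset[of _ "{1..n} \<times> {1..n}"])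

lemma finite_valid: "finite {\<iota>. valid n \<iota>}"
  unfolding valid_set using finite_PX finite_PY by simp

lemma card_valid: "card {\<iota>. valid n \<iota>} = card (PX n) + card (PY n)"
proof -
  have d: "(\<lambda>(i, j). IX i j) ` PX n \<inter> (\<lambda>(i, j, t). IY i j t) ` PY n = {}" by auto
  have i1: "inj_on (\<lambda>(i, j). IX i j) (PX n)" by (auto simp add: inj_on_def)
  have i2: "inj_on (\<lambda>(i, j, t). IY i j t) (PY n)" by (auto simp add: inj_on_def)
  show ?thesis unfolding valid_set
    using card_Un_disjoint[OF finite_imageI[OF finite_PX] finite_imageI[OF finite_PY] d]
      card_image[OF i1] card_image[OF i2] by simp
qed

lemma pairs_card: "finite A \<Longrightarrow> 2 * card {(j, t). j \<in> A \<and> t \<in> A \<and> (j::nat) < t} = card A * (card A - 1)"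
proof (induction A rule: finite_induct)
  case empty then show ?case by simp
next
  case (insert x A)
  let ?P = "\<lambda>A. {(j, t). j \<in> A \<and> t \<in> A \<and> (j::nat) < t}"
  let ?N = "(\<lambda>j. if j < x then (j, x) else (x, j)) ` A"
  have eq: "?P (insert x A) = ?P A \<union> ?N"
  proof
    show "?P (insert x A) \<subseteq> ?P A \<union> ?N"
    proof
      fix p assume "p \<in> ?P (insert x A)"
      then obtain j t where p: "p = (j, t)" "j \<in> insert x A" "t \<in> insert x A" "j < t" by blast
      show "p \<in> ?P A \<union> ?N"
      proof (cases "j = x")
        case True
        then have "t \<in> A" "\<not> t < x" using p by auto
        then have "p \<in> ?N" using p True by (auto simp add: image_iff)
        then show ?thesis by blast
      next
        case False
        show ?thesis
        proof (cases "t = x")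
          case True
          then have "j \<in> A" "j < x" using p False by auto
          then have "p \<in> ?N" using p True by (auto simp add: image_iff)
          then show ?thesis by blast
        next
          case False
          then show ?thesis using p \<open>j \<noteq> x\<close> by auto
        qed
      qed
    qed
  next
    show "?P A \<union> ?N \<subseteq> ?P (insert x A)"
    proof
      fix p assume "p \<in> ?P A \<union> ?N"
      then show "p \<in> ?P (insert x A)"
      proof
        assume "p \<in> ?P A" then show ?thesis by auto
      next
        assume "p \<in> ?N"
        then obtain j where j: "j \<in> A" "p = (if j < x then (j, x) else (x, j))" by blast
        have "j \<noteq> x" using j insert.hyps by auto
        then show ?thesis using j by auto
      qed
    qed
  qed
  have d: "?P A \<inter> ?N = {}" using insert.hyps by auto
  have inj: "inj_on (\<lambda>j. if j < x then (j, x) else (x, j)) A"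
    using insert.hyps by (auto simp add: inj_on_def split: if_splits)
  have fP: "finite (?P A)"
  proof -
    have "?P A \<subseteq> A \<times> A" by auto
    then show ?thesis using insert.hyps finite_subset by blast
  qed
  have "card (?P (insert x A)) = card (?P A) + card A"
    unfolding eq using card_Un_disjoint[OF fP finite_imageI[OF insert.hyps(1)] d] card_image[OF inj] by simp
  then have "2 * card (?P (insert x A)) = card A * (card A - 1) + 2 * card A"
    using insert.IH by simp
  also have "\<dots> = card (insert x A) * (card (insert x A) - 1)"
    using insert.hyps by (cases "card A") (auto simp add: algebra_simps)
  finally show ?case .
qed

lemma card_PX: "2 * card (PX n) = n * (n - 1)"
  using pairs_card[of "{1..n}"] by (simp add: PX_def)

lemma card_PY: "2 * card (PY n) = n * ((n - 1) * (n - 2))"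
proof -
  have c: "2 * card {(j, t). j \<in> {1..n} - {i} \<and> t \<in> {1..n} - {i} \<and> j < t} = (n - 1) * (n - 2)"
    if i: "i \<in> {1..n}" for i
  proof -
    have "card ({1..n} - {i}) = n - 1" using i by simp
    then show ?thesis using pairs_card[of "{1..n} - {i}"] by (simp add: diff_diff_left numeral_2_eq_2)
  qed
  have f: "finite {(j, t). j \<in> {1..n} - {i} \<and> t \<in> {1..n} - {i} \<and> (j::nat) < t}" for i
  proof -
    have "{(j, t). j \<in> {1..n} - {i} \<and> t \<in> {1..n} - {i} \<and> (j::nat) < t} \<subseteq> {1..n} \<times> {1..n}" by auto
    then show ?thesis by (rule finite_subset) simp
  qed
  have "card (PY n) = (\<Sum>i\<in>{1..n}. card {(j, t). j \<in> {1..n} - {i} \<and> t \<in> {1..n} - {i} \<and> j < t})"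
    unfolding PY_def by (rule card_SigmaI) (rule finite_atLeastAtMost, intro ballI f)
  then have "2 * card (PY n) = (\<Sum>i\<in>{1..n}. 2 * card {(j, t). j \<in> {1..n} - {i} \<and> t \<in> {1..n} - {i} \<and> j < t})"
    by (simp add: sum_distrib_left)
  also have "\<dots> = (\<Sum>i\<in>{1..n}. (n - 1) * (n - 2))" by (rule sum.cong) (rule refl, rule c)
  finally show ?thesis by simp
qed


lemma comm_group_Q: "comm_group (Qn n)"
  by (rule group.comm_group_gr2[OF group_PS])

lemma finite_Bset: "finite (Bset n)"
  unfolding Bset_image using finite_valid by simp

lemma inj_el: "inj_on (el n) {\<iota>. valid n \<iota>}"
proof (rule inj_onI)
  fix \<iota> \<iota>' assume v: "\<iota> \<in> {\<iota>. valid n \<iota>}" "\<iota>' \<in> {\<iota>. valid n \<iota>}" and e: "el n \<iota> = el n \<iota>'"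
  show "\<iota> = \<iota>'"
  proof (rule ccontr)
    assume "\<iota> \<noteq> \<iota>'"
    then have z: "coordv n (el n \<iota>') \<iota> = 0" using coord_other v by simp
    have "coordv n (el n \<iota>) \<iota> \<noteq> 0" using coord_own v by simp
    then show False using z e by simp
  qed
qed

lemma coordv_mult: assumes "U \<in> carrier (Qn n)" "V \<in> carrier (Qn n)"
  shows "coordv n (U \<otimes>\<^bsub>Qn n\<^esub> V) \<iota> = coordv n U \<iota> + coordv n V \<iota>"
proof -
  obtain p r u v where k: "kap \<iota> = (p, r, u, v)" by (metis prod_cases4)
  show ?thesis unfolding coordv_def k using Psi_mult[OF assms] by simp
qed

lemma coord_finprod:
  shows "coordv n (finprod (Qn n) (\<lambda>b. b [^]\<^bsub>Qn n\<^esub> (c b :: int)) (Bset n)) \<iota> =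
    (\<Sum>b\<in>Bset n. c b * coordv n b \<iota>)"
proof -
  have add: "\<And>x y. x \<in> carrier (Qn n) \<Longrightarrow> y \<in> carrier (Qn n) \<Longrightarrow>
      coordv n (x \<otimes>\<^bsub>Qn n\<^esub> y) \<iota> = coordv n x \<iota> + coordv n y \<iota>"
    by (rule coordv_mult)
  have g: "(\<lambda>b. b [^]\<^bsub>Qn n\<^esub> (c b :: int)) \<in> Bset n \<rightarrow> carrier (Qn n)"
  proof (rule Pi_I)
    fix b assume "b \<in> Bset n"
    then have "b \<in> carrier (Qn n)" using Bset_sub by blast
    then show "b [^]\<^bsub>Qn n\<^esub> (c b :: int) \<in> carrier (Qn n)" by (rule group.int_pow_closed[OF group_Q])
  qed
  have "coordv n (finprod (Qn n) (\<lambda>b. b [^]\<^bsub>Qn n\<^esub> (c b :: int)) (Bset n)) \<iota> =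
    (\<Sum>b\<in>Bset n. coordv n (b [^]\<^bsub>Qn n\<^esub> (c b :: int)) \<iota>)"
    by (rule additive_finprod[where f="\<lambda>U. coordv n U \<iota>", OF comm_group_Q add finite_Bset g])
  also have "\<dots> = (\<Sum>b\<in>Bset n. c b * coordv n b \<iota>)"
  proof (rule sum.cong)
    fix b assume "b \<in> Bset n"
    then have "b \<in> carrier (Qn n)" using Bset_sub by blast
    then show "coordv n (b [^]\<^bsub>Qn n\<^esub> (c b :: int)) \<iota> = c b * coordv n b \<iota>"
      using additive_pow[where f="\<lambda>U. coordv n U \<iota>", OF group_Q add, of b "c b"] by simp
  qed simp
  finally show ?thesis .
qed

lemma coord_sum_single: assumes v: "valid n \<iota>"
  shows "(\<Sum>b\<in>Bset n. (c b :: int) * coordv n b \<iota>) = c (el n \<iota>) * coordv n (el n \<iota>) \<iota>"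
proof -
  have mem: "el n \<iota> \<in> Bset n" unfolding Bset_image using v by blast
  have "(\<Sum>b\<in>Bset n. c b * coordv n b \<iota>) = (\<Sum>b\<in>Bset n. if b = el n \<iota> then c b * coordv n b \<iota> else 0)"
  proof (rule sum.cong)
    fix b assume b: "b \<in> Bset n"
    then obtain \<iota>' where i': "valid n \<iota>'" "b = el n \<iota>'" unfolding Bset_image by blast
    show "c b * coordv n b \<iota> = (if b = el n \<iota> then c b * coordv n b \<iota> else 0)"
    proof (cases "b = el n \<iota>")
      case True then show ?thesis by simp
    next
      case False
      then have "\<iota>' \<noteq> \<iota>" using i' by auto
      then have "coordv n b \<iota> = 0" using coord_other[OF v i'(1)] i'(2) by simp
      then show ?thesis using False by simp
    qed
  qed simp
  also have "\<dots> = c (el n \<iota>) * coordv n (el n \<iota>) \<iota>"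
    using mem finite_Bset by simp
  finally show ?thesis .
qed

lemma coeff_unique:
  assumes c: "c \<in> extensional (Bset n)" and c': "c' \<in> extensional (Bset n)"
    and e: "finprod (Qn n) (\<lambda>b. b [^]\<^bsub>Qn n\<^esub> (c b :: int)) (Bset n) =
            finprod (Qn n) (\<lambda>b. b [^]\<^bsub>Qn n\<^esub> (c' b :: int)) (Bset n)"
  shows "c = c'"
proof (rule extensionalityI[OF c c'])
  fix b assume b: "b \<in> Bset n"
  then obtain \<iota> where i: "valid n \<iota>" "b = el n \<iota>" unfolding Bset_image by blast
  have A: "coordv n (finprod (Qn n) (\<lambda>b. b [^]\<^bsub>Qn n\<^esub> (c b :: int)) (Bset n)) \<iota> = c b * coordv n b \<iota>"
    unfolding coord_finprod[where c=c and n=n and \<iota>=\<iota>] coord_sum_single[OF i(1), of c] i(2) ..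
  have B: "coordv n (finprod (Qn n) (\<lambda>b. b [^]\<^bsub>Qn n\<^esub> (c' b :: int)) (Bset n)) \<iota> = c' b * coordv n b \<iota>"
    unfolding coord_finprod[where c=c' and n=n and \<iota>=\<iota>] coord_sum_single[OF i(1), of c'] i(2) ..
  have "c b * coordv n b \<iota> = c' b * coordv n b \<iota>" unfolding A[symmetric] B[symmetric] e ..
  moreover have "coordv n b \<iota> \<noteq> 0" using coord_own[OF i(1)] i(2) by simp
  ultimately show "c b = c' b" by simp
qed

lemma card_Bset: "card (Bset n) = card (PX n) + card (PY n)"
  unfolding Bset_image card_image[OF inj_el] card_valid ..

lemma basis: "abelian_basis (Qn n) (Bset n)"
  unfolding abelian_basis_def
proof (intro conjI ballI)
  show "finite (Bset n)" by (rule finite_Bset)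
  show "Bset n \<subseteq> carrier (Qn n)" by (rule Bset_sub)
  fix g assume g: "g \<in> carrier (Qn n)"
  then have "g \<in> Sg n" using span by blast
  obtain c :: "_ \<Rightarrow> int" where c: "c \<in> extensional (Bset n) \<and> g = finprod (Qn n) (\<lambda>b. b [^]\<^bsub>Qn n\<^esub> c b) (Bset n)"
    using generate_finprod[OF comm_group_Q finite_Bset Bset_sub \<open>g \<in> Sg n\<close>] by (rule exE)
  show "\<exists>!c :: _ \<Rightarrow> int. c \<in> extensional (Bset n) \<and> g = finprod (Qn n) (\<lambda>b. b [^]\<^bsub>Qn n\<^esub> c b) (Bset n)"
  proof (rule ex1I[of _ c])
    show "c \<in> extensional (Bset n) \<and> g = finprod (Qn n) (\<lambda>b. b [^]\<^bsub>Qn n\<^esub> c b) (Bset n)" using c .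
    fix c' :: "_ \<Rightarrow> int"
    assume c': "c' \<in> extensional (Bset n) \<and> g = finprod (Qn n) (\<lambda>b. b [^]\<^bsub>Qn n\<^esub> c' b) (Bset n)"
    show "c' = c" using coeff_unique[of c' n c] c c' by simp
  qed
qed

lemma card_formula: assumes n: "n \<ge> 4"
  shows "card (Bset n) = (n - 1) * r_n n 2 \<and> card (Bset n) = n * (n - 1)^2 div 2"
proof -
  define m where "m = n - 2"
  have m: "n = m + 2" using n by (simp add: m_def)
  let ?a = "card (PX n)" and ?b = "card (PY n)"
  have a: "2 * ?a = (m + 2) * (m + 1)" using card_PX[of n] m by simp
  have b: "2 * ?b = (m + 2) * ((m + 1) * m)" using card_PY[of n] m by simp
  have sq: "n^2 - n = (m + 2) * (m + 1)" using m by (simp add: power2_eq_square algebra_simps)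
  have r: "r_n n 2 = ?a" unfolding r_n_def using sq a by simp
  have "2 * (?a + ?b) = 2 * ((m + 1) * ?a)"
    using a b by (simp add: algebra_simps)
  then have "?a + ?b = (m + 1) * ?a" by simp
  then have e1: "card (Bset n) = (n - 1) * r_n n 2" using card_Bset r m by simp
  have "2 * (?a + ?b) = n * (n - 1)^2" using a b m by (simp add: power2_eq_square algebra_simps)
  then have "?a + ?b = n * (n - 1)^2 div 2" by simp
  then show ?thesis using e1 card_Bset by simp
qed

theorem theorem3p1p2:
  fixes n :: nat
  assumes "n \<ge> 4"
  defines "G \<equiv> PSigma n"
  defines "B \<equiv> {comm_class G (xi n i j) (xi n j i) | i j. 1 \<le> i \<and> i < j \<and> j \<le> n}
              \<union> {comm_class G (xi n i j) (xi n i t) | i j t.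
                   1 \<le> i \<and> i \<le> n \<and> i \<noteq> j \<and> i \<noteq> t \<and> 1 \<le> j \<and> j < t \<and> t \<le> n}"
  shows "comm_group (gr2 G) \<and> abelian_basis (gr2 G) B
         \<and> card B = (n - 1) * r_n n 2 \<and> card B = n * (n - 1)^2 div 2"
proof -
  have B: "B = Bset n" unfolding B_def G_def Bset_def ..
  show ?thesis unfolding B G_def using comm_group_Q basis card_formula[OF assms(1)] by simp
qed


end
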